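(* For each prime number $p$, the following equalities hold in the ring of symmetric functions: $$\sum_{\lambda\leq(p-1,p-1,1)} m_\lambda=\sum_{i=0}^{p-2}(-1)^i\,S_{(p-1,\,p-1-i,\,1^{i+1})},$$ where the sum on the left runs over all partitions $\lambda$ of $2p-1$ with $\lambda\leq(p-1,p-1,1)$ in the dominance order, and $$\sum_{\lambda\leq(p-1,1)} m_\lambda=\sum_{i=0}^{p-2}(-1)^i\,S_{(p-1-i,\,1^{i+1})},$$ where the sum on the left runs over all partitions $\lambda$ of $p$ with $\lambda\leq(p-1,1)$ in the dominance order.
   Context: $m_\lambda$ denotes the monomial symmetric function and $S_\lambda$ the Schur function associated with a partition $\lambda$; $1^{k}$ denotes $k$ parts equal to $1$. The dominance order on partitions of the same integer is $\lambda\leq\mu$ iff $\lambda_1+\cdots+\lambda_k\leq\mu_1+\cdots+\mu_k$ for all $k$. *)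

theory Defs
  imports Main "HOL-Library.Multiset" "HOL-Computational_Algebra.Primes"
begin

text \<open>Symmetric functions are represented as formal power series in countably many
variables x_0, x_1, ...: a series is its coefficient function, sending an exponent
vector alpha :: nat => nat (coefficient of prod_k x_k^(alpha k)) to an integer.
The ring of symmetric functions embeds into this, so equality of coefficient
functions is equality in the ring of symmetric functions.\<close>

type_synonym symfun = "(nat \<Rightarrow> nat) \<Rightarrow> int"

definition is_partition :: "nat list \<Rightarrow> bool" where
  "is_partition lam \<longleftrightarrow> sorted (rev lam) \<and> 0 \<notin> set lam"

definition dominated :: "nat list \<Rightarrow> nat list \<Rightarrow> bool" where
  "dominated lam mu \<longleftrightarrow> (\<forall>k. sum_list (take k lam) \<le> sum_list (take k mu))"

definition monomial_sym :: "nat list \<Rightarrow> symfun" where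
  "monomial_sym lam = (\<lambda>alpha.
     if finite {i. alpha i \<noteq> 0} \<and> mset lam = image_mset alpha (mset_set {i. alpha i \<noteq> 0})
     then 1 else 0)"

text \<open>Cells of the Young diagram (row i, column j, 0-indexed).\<close>
definition cells :: "nat list \<Rightarrow> (nat \<times> nat) set" where
  "cells lam = {(i, j). i < length lam \<and> j < lam ! i}"

definition ssyt :: "nat list \<Rightarrow> (nat \<Rightarrow> nat) \<Rightarrow> (nat \<times> nat \<Rightarrow> nat) set" where
  "ssyt lam alpha = {T.
     (\<forall>c. c \<notin> cells lam \<longrightarrow> T c = 0) \<and>
     (\<forall>i j. (i, Suc j) \<in> cells lam \<longrightarrow> T (i, j) \<le> T (i, Suc j)) \<and>
     (\<forall>i j. (Suc i, j) \<in> cells lam \<longrightarrow> T (i, j) < T (Suc i, j)) \<and>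
     (\<forall>k. card {c \<in> cells lam. T c = k} = alpha k)}"

text \<open>Schur function S_lambda = sum over SSYT T of x^T.\<close>
definition schur :: "nat list \<Rightarrow> symfun" where
  "schur lam = (\<lambda>alpha. int (card (ssyt lam alpha)))"

end

theory Submission
  imports Defs
begin

lemma alt_choose_sum:
  assumes "m \<le> K"
  shows "(\<Sum>k=1..K. (-1::int)^(k-1) * int (m choose k)) = (if m = 0 then 0 else 1)"
proof -
  have A: "(\<Sum>k\<le>K. (-1::int)^k * int (m choose k)) = (\<Sum>k\<le>m. (-1::int)^k * int (m choose k))"
    by (rule sum.mono_neutral_right) (use assms in auto)
  have B: "(\<Sum>k\<le>m. (-1::int)^k * int (m choose k)) = (if m = 0 then 1 else 0)"
    using choose_alternating_sum[of m] by auto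
  have C: "{..K} = insert 0 {1..K}" by auto
  have D: "(\<Sum>k\<le>K. (-1::int)^k * int (m choose k)) = 1 + (\<Sum>k=1..K. (-1::int)^k * int (m choose k))"
    unfolding C by (subst sum.insert) auto
  have E: "(\<Sum>k=1..K. (-1::int)^(k-1) * int (m choose k)) = - (\<Sum>k=1..K. (-1::int)^k * int (m choose k))"
    unfolding sum_negf[symmetric]
    by (rule sum.cong) (auto simp: power_eq_if)
  show ?thesis using A B D E by auto
qed

lemma alt_subset_sum:
  assumes "finite B" "card B \<le> K"
  shows "(\<Sum>k=1..K. (-1::int)^(k-1) * int (card {S. S \<subseteq> B \<and> card S = k})) = (if B = {} then 0 else 1)"
  using alt_choose_sum[OF assms(2)] assms(1) by (simp add: n_subsets)

lemma sorted_nth0_le: "sorted V \<Longrightarrow> x \<in> set V \<Longrightarrow> V!0 \<le> x"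
  by (metis in_set_conv_nth le0 sorted_nth_mono)

lemma sortedlt_nth0_le: "sorted_wrt (<) W \<Longrightarrow> x \<in> set W \<Longrightarrow> W!0 \<le> (x::nat)"
  by (metis sorted_nth0_le strict_sorted_iff)

lemma mset_set_subseteq: "finite S \<Longrightarrow> S \<subseteq> set_mset R \<Longrightarrow> mset_set S \<subseteq># R"
  unfolding subseteq_mset_def
proof
  fix a assume "finite S" "S \<subseteq> set_mset R"
  then show "count (mset_set S) a \<le> count R a"
    by (cases "a \<in> S") (auto simp: count_mset_set)
qed

definition HS :: "nat multiset \<Rightarrow> nat \<Rightarrow> nat \<Rightarrow> (nat list \<times> nat list) set" where
  "HS R b k = {(V,W). length V = b \<and> length W = k \<and> sorted V \<and> sorted_wrt (<) W \<and>
      V!0 < W!0 \<and> mset V + mset W = R}"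

definition Bh :: "nat multiset \<Rightarrow> nat set" where
  "Bh R = set_mset R - {Min (set_mset R)}"

lemma HS_card:
  assumes "size R = b + k" "0 < b" "0 < k"
  shows "card (HS R b k) = card {S. S \<subseteq> Bh R \<and> card S = k}"
proof -
  let ?f = "\<lambda>(V::nat list,W::nat list). set W"
  let ?g = "\<lambda>S. (sorted_list_of_multiset (R - mset_set S), sorted_list_of_set S)"
  have "bij_betw ?f (HS R b k) {S. S \<subseteq> Bh R \<and> card S = k}"
  proof (rule bij_betw_byWitness[where f' = ?g])
    show "\<forall>a\<in>HS R b k. ?g (?f a) = a"
    proof
      fix a assume "a \<in> HS R b k"
      then obtain V W where a: "a = (V,W)" and h: "length V = b" "length W = k" "sorted V"
        "sorted_wrt (<) W" "V!0 < W!0" "mset V + mset W = R" unfolding HS_def by auto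
      have dW: "distinct W" "sorted W" using h(4) strict_sorted_iff by auto
      have "R - mset_set (set W) = mset V" using h(6) mset_set_set[OF dW(1)] by auto
      then show "?g (?f a) = a" using a dW h(3)
        by (simp add: sorted_list_of_set.idem_if_sorted_distinct sorted_sort_id)
    qed
    show "\<forall>a'\<in>{S. S \<subseteq> Bh R \<and> card S = k}. ?f (?g a') = a'"
    proof
      fix S assume "S \<in> {S. S \<subseteq> Bh R \<and> card S = k}"
      then have "S \<subseteq> Bh R" by auto
      then have "finite S" unfolding Bh_def by (meson finite_Diff finite_set_mset finite_subset)
      then show "?f (?g S) = S" by simp
    qed
    show "?f ` HS R b k \<subseteq> {S. S \<subseteq> Bh R \<and> card S = k}"
    proof
      fix S assume "S \<in> ?f ` HS R b k"
      then obtain V W where S: "S = set W" and h: "length V = b" "length W = k" "sorted V"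
        "sorted_wrt (<) W" "V!0 < W!0" "mset V + mset W = R" unfolding HS_def by auto
      have dW: "distinct W" using h(4) strict_sorted_iff by auto
      have sR: "set_mset R = set V \<union> set W" using h(6) by (metis set_mset_mset set_mset_union)
      have V0: "V!0 \<in> set V" using h(1) assms(2) by auto
      have minR: "Min (set_mset R) = V!0"
      proof (rule Min_eqI)
        show "finite (set_mset R)" by simp
        show "V!0 \<in> set_mset R" using sR V0 by auto
        fix y assume "y \<in> set_mset R"
        then show "V!0 \<le> y" using sR sorted_nth0_le[OF h(3)] sortedlt_nth0_le[OF h(4)] h(5)
          by fastforce
      qed
      have "set W \<subseteq> Bh R" unfolding Bh_def minR using sR sortedlt_nth0_le[OF h(4)] h(5) by fastforce
      moreover have "card (set W) = k" using dW h(2) distinct_card by blast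
      ultimately show "S \<in> {S. S \<subseteq> Bh R \<and> card S = k}" using S by auto
    qed
    show "?g ` {S. S \<subseteq> Bh R \<and> card S = k} \<subseteq> HS R b k"
    proof
      fix x assume "x \<in> ?g ` {S. S \<subseteq> Bh R \<and> card S = k}"
      then obtain S where x: "x = ?g S" and S: "S \<subseteq> Bh R" "card S = k" by auto
      have fS: "finite S" using S(1) unfolding Bh_def by (meson finite_Diff finite_set_mset finite_subset)
      have SR: "S \<subseteq> set_mset R" using S(1) unfolding Bh_def by auto
      have sub: "mset_set S \<subseteq># R" using mset_set_subseteq[OF fS SR] .
      define V where "V = sorted_list_of_multiset (R - mset_set S)"
      define W where "W = sorted_list_of_set S"
      have mV: "mset V = R - mset_set S" unfolding V_def by simp
      have lV: "length V = b" using mV assms(1) S(2) sub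
        by (metis add_diff_cancel_right' size_Diff_submset size_mset size_mset_set)
      have lW: "length W = k" unfolding W_def using S(2) by simp
      have sW: "sorted_wrt (<) W" unfolding W_def by simp
      have setW: "set W = S" unfolding W_def using fS by simp
      have mW: "mset W = mset_set S" unfolding W_def using fS
        by (metis mset_sorted_list_of_multiset sorted_list_of_mset_set)
      have Rne: "R \<noteq> {#}" using assms by auto
      let ?m = "Min (set_mset R)"
      have mR: "?m \<in># R" using Rne by simp
      have mS: "?m \<notin> S" using S(1) unfolding Bh_def by auto
      have "count (mset_set S) ?m = 0" using mS by (simp add: count_mset_set)
      then have "?m \<in># R - mset_set S" using mR by (simp add: in_diff_count)
      then have mVin: "?m \<in> set V" using mV by (metis set_mset_mset)
      have "V ! 0 \<le> ?m" using sorted_nth0_le[OF _ mVin] unfolding V_def by simp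
      moreover have "?m \<le> V!0"
      proof -
        have "V!0 \<in> set V" using lV assms(2) by auto
        then have "V!0 \<in># R" using mV by (metis in_diffD set_mset_mset)
        then show ?thesis by simp
      qed
      moreover have "?m < W!0"
      proof -
        have "W!0 \<in> S" using setW lW assms(3) by (metis nth_mem)
        then have "W!0 \<in> set_mset R" "W!0 \<noteq> ?m" using S(1) unfolding Bh_def by auto
        moreover have "?m \<le> W!0" using \<open>W!0 \<in> set_mset R\<close> by simp
        ultimately show ?thesis by (metis le_neq_implies_less)
      qed
      ultimately have lt: "V!0 < W!0" by simp
      have "mset V + mset W = R" using mV mW sub by simp
      then show "x \<in> HS R b k" unfolding x HS_def using lV lW sW lt V_def W_def by auto
    qed
  qed
  then show ?thesis by (rule bij_betw_same_card)
qed

lemma sorted_Min_nth0: "sorted V \<Longrightarrow> V \<noteq> [] \<Longrightarrow> Min (set V) = V!0"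
  by (rule Min_eqI) (auto intro: sorted_nth0_le)

definition Tr :: "nat \<Rightarrow> nat \<Rightarrow> nat \<Rightarrow> nat multiset \<Rightarrow> (nat list \<times> nat list \<times> nat list) set" where
  "Tr a b k A = {(U,V,W). length U = a \<and> length V = b \<and> length W = k \<and> sorted U \<and> sorted V \<and>
      sorted_wrt (<) W \<and> V!0 < W!0 \<and> mset U + mset V + mset W = A}"

definition Ms :: "nat \<Rightarrow> nat multiset \<Rightarrow> nat multiset set" where
  "Ms a A = {M. M \<subseteq># A \<and> size M = a}"

definition Rows :: "nat \<Rightarrow> nat multiset \<Rightarrow> nat list set" where
  "Rows a A = {U. length U = a \<and> sorted U \<and> mset U \<subseteq># A}"

definition Bq :: "nat multiset \<Rightarrow> nat multiset \<Rightarrow> nat set" where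
  "Bq A M = {x \<in> set_mset M. Min (set_mset (A - M)) < x}"


lemma finite_lists_in: "finite {xs. set xs \<subseteq> set_mset A \<and> length xs = b}"
  by (rule finite_lists_length_eq) simp

lemma finite_Rows: "finite (Rows a A)"
proof (rule finite_subset[OF _ finite_lists_in[of A a]])
  show "Rows a A \<subseteq> {xs. set xs \<subseteq> set_mset A \<and> length xs = a}"
    unfolding Rows_def by (auto dest: mset_subset_eqD)
qed

lemma finite_HS: "finite (HS R b k)"
proof (rule finite_subset[OF _ finite_cartesian_product[OF finite_lists_in[of R b] finite_lists_in[of R k]]])
  show "HS R b k \<subseteq> {xs. set xs \<subseteq> set_mset R \<and> length xs = b} \<times> {xs. set xs \<subseteq> set_mset R \<and> length xs = k}"
    unfolding HS_def by auto
qed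

lemma Ms_Rows: "Ms a A = mset ` Rows a A"
proof
  show "Ms a A \<subseteq> mset ` Rows a A"
  proof
    fix M assume "M \<in> Ms a A"
    then have "sorted_list_of_multiset M \<in> Rows a A" unfolding Ms_def Rows_def
      by (metis (mono_tags, lifting) mem_Collect_eq mset_sorted_list_of_multiset size_mset sorted_sorted_list_of_multiset)
    then show "M \<in> mset ` Rows a A" by (metis image_eqI mset_sorted_list_of_multiset)
  qed
  show "mset ` Rows a A \<subseteq> Ms a A" unfolding Ms_def Rows_def by auto
qed

lemma inj_mset_Rows: "inj_on mset (Rows a A)"
  unfolding inj_on_def Rows_def by (metis mem_Collect_eq properties_for_sort)

lemma finite_Ms: "finite (Ms a A)"
  using Ms_Rows finite_Rows by simp

lemma Tr_Sigma: "Tr a b k A = Sigma (Rows a A) (\<lambda>U. HS (A - mset U) b k)"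
  unfolding Tr_def Rows_def HS_def
  by (auto simp: subset_mset.le_iff_add add.assoc)

lemma tr_card_U:
  assumes "size A = a + b + k" "0 < b" "0 < k"
  shows "card (Tr a b k A) = (\<Sum>M\<in>Ms a A. card {S. S \<subseteq> Bh (A - M) \<and> card S = k})"
proof -
  have "card (Tr a b k A) = (\<Sum>U\<in>Rows a A. card (HS (A - mset U) b k))"
    unfolding Tr_Sigma by (rule card_SigmaI) (auto simp: finite_Rows finite_HS)
  also have "\<dots> = (\<Sum>U\<in>Rows a A. card {S. S \<subseteq> Bh (A - mset U) \<and> card S = k})"
  proof (rule sum.cong[OF refl])
    fix U assume "U \<in> Rows a A"
    then have "size (A - mset U) = b + k" using assms(1) unfolding Rows_def
      by (simp add: size_Diff_submset)
    then show "card (HS (A - mset U) b k) = card {S. S \<subseteq> Bh (A - mset U) \<and> card S = k}"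
      using HS_card assms by blast
  qed
  also have "\<dots> = (\<Sum>M\<in>Ms a A. card {S. S \<subseteq> Bh (A - M) \<and> card S = k})"
    unfolding Ms_Rows by (rule sum.reindex[symmetric, OF inj_mset_Rows, unfolded comp_def])
  finally show ?thesis .
qed

lemma card_set_mset_le: "card (set_mset M) \<le> size M"
proof -
  have "card (set_mset M) = (\<Sum>x\<in>set_mset M. 1)" by simp
  also have "\<dots> \<le> (\<Sum>x\<in>set_mset M. count M x)" by (rule sum_mono) auto
  also have "\<dots> = size M" by (simp add: size_multiset_overloaded_eq)
  finally show ?thesis .
qed

lemma tr_card_UW:
  assumes "size A = a + b + k" "0 < b" "0 < k"
  shows "card (Tr a b k A) = (\<Sum>M\<in>Ms (a+k) A. card {S. S \<subseteq> Bq A M \<and> card S = k})"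
proof -
  let ?f = "\<lambda>(U::nat list,V::nat list,W::nat list). (mset U + mset W, set W)"
  let ?g = "\<lambda>(M,S). (sorted_list_of_multiset (M - mset_set S), sorted_list_of_multiset (A - M), sorted_list_of_set S)"
  let ?T = "Sigma (Ms (a+k) A) (\<lambda>M. {S. S \<subseteq> Bq A M \<and> card S = k})"
  have "bij_betw ?f (Tr a b k A) ?T"
  proof (rule bij_betw_byWitness[where f' = ?g])
    show "\<forall>x\<in>Tr a b k A. ?g (?f x) = x"
    proof
      fix x assume "x \<in> Tr a b k A"
      then obtain U V W where x: "x = (U,V,W)" and h: "length U = a" "length V = b" "length W = k"
        "sorted U" "sorted V" "sorted_wrt (<) W" "V!0 < W!0" "mset U + mset V + mset W = A"
        unfolding Tr_def by auto
      have dW: "distinct W" "sorted W" using h(6) strict_sorted_iff by auto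
      have e1: "mset U + mset W - mset_set (set W) = mset U" using mset_set_set[OF dW(1)] by simp
      have e2: "A - (mset U + mset W) = mset V"
      proof -
        have "A = (mset U + mset W) + mset V" using h(8) by (simp add: ac_simps)
        then show ?thesis by simp
      qed
      show "?g (?f x) = x" unfolding x using e1 e2 dW h(4,5)
        by (simp add: sorted_list_of_set.idem_if_sorted_distinct sorted_sort_id)
    qed
    show "\<forall>y\<in>?T. ?f (?g y) = y"
    proof
      fix y assume "y \<in> ?T"
      then obtain M S where y: "y = (M,S)" and M: "M \<subseteq># A" and S: "S \<subseteq> Bq A M"
        unfolding Ms_def by auto
      have fS: "finite S" by (rule finite_subset[OF S]) (simp add: Bq_def)
      have "S \<subseteq> set_mset M" using S unfolding Bq_def by auto
      then have sub: "mset_set S \<subseteq># M" using mset_set_subseteq fS by blast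
      have mW: "mset (sorted_list_of_set S) = mset_set S"
        by (metis mset_sorted_list_of_multiset sorted_list_of_mset_set)
      show "?f (?g y) = y" unfolding y using sub mW fS by simp
    qed
    show "?f ` Tr a b k A \<subseteq> ?T"
    proof
      fix y assume "y \<in> ?f ` Tr a b k A"
      then obtain U V W where y: "y = ?f (U,V,W)" and h: "length U = a" "length V = b" "length W = k"
        "sorted U" "sorted V" "sorted_wrt (<) W" "V!0 < W!0" "mset U + mset V + mset W = A"
        unfolding Tr_def by auto
      have dW: "distinct W" using h(6) strict_sorted_iff by auto
      have M: "mset U + mset W \<subseteq># A" using h(8) by (metis add.commute add.left_commute mset_subset_eq_add_left)
      have sM: "size (mset U + mset W) = a + k" using h by simp
      have e2: "A - (mset U + mset W) = mset V"
      proof -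
        have "A = (mset U + mset W) + mset V" using h(8) by (simp add: ac_simps)
        then show ?thesis by simp
      qed
      have Vne: "V \<noteq> []" using h(2) assms(2) by auto
      have minV: "Min (set_mset (A - (mset U + mset W))) = V!0"
        unfolding e2 using sorted_Min_nth0[OF h(5) Vne] by simp
      have "set W \<subseteq> Bq A (mset U + mset W)"
        unfolding Bq_def minV using h(7) sortedlt_nth0_le[OF h(6)] by fastforce
      moreover have "card (set W) = k" using dW h(3) distinct_card by blast
      ultimately show "y \<in> ?T" unfolding y Ms_def using M sM by auto
    qed
    show "?g ` ?T \<subseteq> Tr a b k A"
    proof
      fix x assume "x \<in> ?g ` ?T"
      then obtain M S where x: "x = ?g (M,S)" and M: "M \<subseteq># A" "size M = a + k"
        and S: "S \<subseteq> Bq A M" "card S = k"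
        unfolding Ms_def by auto
      have fS: "finite S" by (rule finite_subset[OF S(1)]) (simp add: Bq_def)
      have "S \<subseteq> set_mset M" using S unfolding Bq_def by auto
      then have sub: "mset_set S \<subseteq># M" using mset_set_subseteq fS by blast
      define U where "U = sorted_list_of_multiset (M - mset_set S)"
      define V where "V = sorted_list_of_multiset (A - M)"
      define W where "W = sorted_list_of_set S"
      have mU: "mset U = M - mset_set S" unfolding U_def by simp
      have mV: "mset V = A - M" unfolding V_def by simp
      have mW: "mset W = mset_set S" unfolding W_def
        by (metis mset_sorted_list_of_multiset sorted_list_of_mset_set)
      have lU: "length U = a" using mU M(2) S(2) sub
        by (metis add_diff_cancel_right' size_Diff_submset size_mset size_mset_set)
      have lV: "length V = b" using mV M assms(1)
        by (metis add_diff_cancel_left' size_Diff_submset size_mset add.commute add.left_commute)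
      have lW: "length W = k" unfolding W_def using S(2) by simp
      have Vne: "V \<noteq> []" using lV assms(2) by auto
      have V0: "V!0 = Min (set_mset (A - M))"
        using sorted_Min_nth0[OF _ Vne] mV unfolding V_def
        by (metis set_mset_mset sorted_sorted_list_of_multiset)
      have setW: "set W = S" unfolding W_def using fS by simp
      have "W \<noteq> []" using lW assms(3) by auto
      then have "W!0 \<in> S" using setW by (metis nth_mem length_greater_0_conv)
      then have lt: "V!0 < W!0" using S(1) V0 unfolding Bq_def by auto
      have cont: "mset U + mset V + mset W = A" using mU mV mW sub M(1)
        by (metis add.commute add.left_commute subset_mset.add_diff_inverse)
      show "x \<in> Tr a b k A" unfolding x Tr_def
        using lU lV lW lt cont U_def V_def W_def by auto
    qed
  qed
  then have "card (Tr a b k A) = card ?T" by (rule bij_betw_same_card)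
  also have "\<dots> = (\<Sum>M\<in>Ms (a+k) A. card {S. S \<subseteq> Bq A M \<and> card S = k})"
  proof (rule card_SigmaI)
    show "finite (Ms (a + k) A)" by (rule finite_Ms)
    show "\<forall>M\<in>Ms (a + k) A. finite {S. S \<subseteq> Bq A M \<and> card S = k}"
      unfolding Bq_def by auto
  qed
  finally show ?thesis .
qed

definition compat :: "nat list \<Rightarrow> nat list \<Rightarrow> bool" where
  "compat U V \<longleftrightarrow> (\<forall>j<length V. U!j < V!j)"

definition swp :: "nat \<Rightarrow> nat list \<Rightarrow> nat list \<Rightarrow> nat list \<times> nat list" where
  "swp j U V = (take j U @ drop (Suc j) V, take (Suc j) V @ drop j U)"

definition Hc :: "nat \<Rightarrow> nat list \<Rightarrow> nat list \<Rightarrow> bool" where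
  "Hc j U V \<longleftrightarrow> j \<le> length U \<and> j < length V \<and> (\<forall>i<j. U!i < V!i) \<and> (j < length U \<longrightarrow> V!j \<le> U!j)"

definition jf :: "nat list \<Rightarrow> nat list \<Rightarrow> nat" where
  "jf U V = (LEAST j. j < length V \<and> V!j \<le> U!j)"

definition jg :: "nat list \<Rightarrow> nat list \<Rightarrow> nat" where
  "jg U V = (LEAST j. length U \<le> j \<or> V!j \<le> U!j)"

lemma swp_swp:
  assumes "j \<le> length U" "j < length V"
  shows "swp j (fst (swp j U V)) (snd (swp j U V)) = (U, V)"
  using assms by (simp add: swp_def min_def)

lemma swp_len:
  assumes "j \<le> length U" "j < length V"
  shows "length (fst (swp j U V)) = length V - 1" "length (snd (swp j U V)) = length U + 1"
  using assms by (auto simp: swp_def)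

lemma swp_mset:
  "mset (fst (swp j U V)) + mset (snd (swp j U V)) = mset U + mset V"
proof -
  have "mset (take j U) + mset (drop j U) = mset U" by (metis append_take_drop_id mset_append)
  moreover have "mset (take (Suc j) V) + mset (drop (Suc j) V) = mset V" by (metis append_take_drop_id mset_append)
  ultimately show ?thesis unfolding swp_def by (simp add: ac_simps)
qed

lemma swp_nth:
  assumes "j \<le> length U" "j < length V"
  shows "\<And>i. i < j \<Longrightarrow> fst (swp j U V) ! i = U!i"
    "\<And>i. j \<le> i \<Longrightarrow> i < length V - 1 \<Longrightarrow> fst (swp j U V) ! i = V!(Suc i)"
    "\<And>i. i \<le> j \<Longrightarrow> snd (swp j U V) ! i = V!i"
    "\<And>i. j < i \<Longrightarrow> i \<le> length U \<Longrightarrow> snd (swp j U V) ! i = U!(i - 1)"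
  using assms apply (auto simp: swp_def nth_append min_def)
  apply (subgoal_tac "length V = Suc j")
   apply simp_all
  done

lemma swp_sorted:
  assumes H: "Hc j U V" and sU: "sorted U" and sV: "sorted V"
  shows "sorted (fst (swp j U V))" "sorted (snd (swp j U V))"
proof -
  have j: "j \<le> length U" "j < length V" using H unfolding Hc_def by auto
  note N = swp_nth[OF j]
  note L = swp_len[OF j]
  show "sorted (fst (swp j U V))"
    unfolding sorted_iff_nth_mono
  proof (intro allI impI)
    fix i m assume im: "i \<le> m" "m < length (fst (swp j U V))"
    then have m: "m < length V - 1" using L by simp
    show "fst (swp j U V) ! i \<le> fst (swp j U V) ! m"
    proof (cases "m < j")
      case True
      then show ?thesis using N(1) im j sU by (simp add: sorted_iff_nth_mono)
    next
      case False
      then have m2: "fst (swp j U V) ! m = V ! Suc m" using N(2) m by simp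
      show ?thesis
      proof (cases "i < j")
        case True
        then have "U!i < V!i" using H unfolding Hc_def by auto
        moreover have "V!i \<le> V!(Suc m)" using sV m im by (simp add: sorted_iff_nth_mono)
        ultimately show ?thesis using N(1)[OF True] m2 by simp
      next
        case False
        then show ?thesis using N(2) m2 im m sV by (simp add: sorted_iff_nth_mono)
      qed
    qed
  qed
  show "sorted (snd (swp j U V))"
    unfolding sorted_iff_nth_mono
  proof (intro allI impI)
    fix i m assume im: "i \<le> m" "m < length (snd (swp j U V))"
    then have m: "m \<le> length U" using L by simp
    show "snd (swp j U V) ! i \<le> snd (swp j U V) ! m"
    proof (cases "m \<le> j")
      case True
      then show ?thesis using N(3) im j sV by (simp add: sorted_iff_nth_mono)
    next
      case False
      then have m2: "snd (swp j U V) ! m = U ! (m - 1)" using N(4) m by simp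
      show ?thesis
      proof (cases "i \<le> j")
        case True
        have "j < length U" using False m by simp
        then have "V!j \<le> U!j" using H unfolding Hc_def by auto
        moreover have "V!i \<le> V!j" using sV True j by (simp add: sorted_iff_nth_mono)
        moreover have "U!j \<le> U!(m - 1)" using sU False m by (simp add: sorted_iff_nth_mono)
        ultimately show ?thesis using N(3)[OF True] m2 by simp
      next
        case False
        then show ?thesis using N(4) m2 im m sU by (simp add: sorted_iff_nth_mono)
      qed
    qed
  qed
qed

lemma swp_Hc:
  assumes H: "Hc j U V" and sV: "sorted V"
  shows "Hc j (fst (swp j U V)) (snd (swp j U V))"
proof -
  have j: "j \<le> length U" "j < length V" using H unfolding Hc_def by auto
  note N = swp_nth[OF j]
  note L = swp_len[OF j]
  have a: "j \<le> length (fst (swp j U V))" using L j by simp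
  have b: "j < length (snd (swp j U V))" using L j by simp
  have c: "\<forall>i<j. fst (swp j U V) ! i < snd (swp j U V) ! i" using H N(1,3) unfolding Hc_def by auto
  have d: "j < length (fst (swp j U V)) \<longrightarrow> snd (swp j U V) ! j \<le> fst (swp j U V) ! j"
  proof
    assume "j < length (fst (swp j U V))"
    then have "j < length V - 1" using L by simp
    then show "snd (swp j U V) ! j \<le> fst (swp j U V) ! j"
      using N(2,3) sV by (simp add: sorted_iff_nth_mono)
  qed
  show ?thesis using a b c d unfolding Hc_def by blast
qed

lemma jg_eq:
  assumes "Hc j U V" shows "jg U V = j"
  unfolding jg_def
proof (rule Least_equality)
  show "length U \<le> j \<or> V!j \<le> U!j" using assms unfolding Hc_def by (cases "j < length U") auto
  fix y assume y: "length U \<le> y \<or> V!y \<le> U!y"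
  show "j \<le> y"
  proof (rule ccontr)
    assume "\<not> j \<le> y"
    then have "y < j" by simp
    then have "y < length U" "U!y < V!y" using assms unfolding Hc_def by auto
    then show False using y by simp
  qed
qed

lemma jf_eq:
  assumes "Hc j U V" "j < length U" shows "jf U V = j"
  unfolding jf_def
proof (rule Least_equality)
  show "j < length V \<and> V!j \<le> U!j" using assms unfolding Hc_def by auto
  fix y assume y: "y < length V \<and> V!y \<le> U!y"
  show "j \<le> y"
  proof (rule ccontr)
    assume "\<not> j \<le> y"
    then have "y < j" by simp
    then have "U!y < V!y" using assms unfolding Hc_def by auto
    then show False using y by simp
  qed
qed

lemma Hc_jf:
  assumes "length V \<le> length U" "\<not> compat U V"
  shows "Hc (jf U V) U V" "jf U V < length U"
proof -
  have ex: "\<exists>j. j < length V \<and> V!j \<le> U!j" using assms(2) unfolding compat_def by (auto simp: not_less)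
  have P: "jf U V < length V \<and> V!(jf U V) \<le> U!(jf U V)" unfolding jf_def by (rule LeastI_ex[OF ex])
  have Q: "\<forall>i<jf U V. U!i < V!i"
  proof (intro allI impI)
    fix i assume "i < jf U V"
    then have "\<not> (i < length V \<and> V!i \<le> U!i)" unfolding jf_def by (rule not_less_Least)
    moreover have "i < length V" using \<open>i < jf U V\<close> P by simp
    ultimately show "U!i < V!i" by simp
  qed
  show "Hc (jf U V) U V" unfolding Hc_def using P Q assms(1) by auto
  show "jf U V < length U" using P assms(1) by simp
qed

lemma Hc_jg:
  assumes "length U < length V"
  shows "Hc (jg U V) U V"
proof -
  have ex: "\<exists>j. length U \<le> j \<or> V!j \<le> U!j" by auto
  have P: "length U \<le> jg U V \<or> V!(jg U V) \<le> U!(jg U V)" unfolding jg_def by (rule LeastI_ex[OF ex])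
  have le: "jg U V \<le> length U" unfolding jg_def by (rule Least_le) simp
  have Q: "\<forall>i<jg U V. U!i < V!i"
  proof (intro allI impI)
    fix i assume "i < jg U V"
    then have "\<not> (length U \<le> i \<or> V!i \<le> U!i)" unfolding jg_def by (rule not_less_Least)
    then show "U!i < V!i" by simp
  qed
  show ?thesis unfolding Hc_def using P Q le assms by auto
qed

definition NCs :: "nat \<Rightarrow> nat \<Rightarrow> nat \<Rightarrow> nat multiset \<Rightarrow> (nat list \<times> nat list \<times> nat list) set" where
  "NCs a b k A = {x \<in> Tr a b k A. \<not> compat (fst x) (fst (snd x))}"

definition Fsw :: "nat list \<times> nat list \<times> nat list \<Rightarrow> nat list \<times> nat list \<times> nat list" where
  "Fsw x = (case x of (U,V,W) \<Rightarrow> (fst (swp (jf U V) U V), snd (swp (jf U V) U V), W))"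

definition Gsw :: "nat list \<times> nat list \<times> nat list \<Rightarrow> nat list \<times> nat list \<times> nat list" where
  "Gsw x = (case x of (U,V,W) \<Rightarrow> (fst (swp (jg U V) U V), snd (swp (jg U V) U V), W))"

lemma tail_swap:
  assumes "b \<le> a" "0 < b"
  shows "card (NCs a b k A) = card (Tr (b-1) (a+1) k A)"
proof -
  have "bij_betw Fsw (NCs a b k A) (Tr (b-1) (a+1) k A)"
  proof (rule bij_betw_byWitness[where f' = Gsw])
    show "\<forall>x\<in>NCs a b k A. Gsw (Fsw x) = x"
    proof
      fix x assume "x \<in> NCs a b k A"
      then obtain U V W where x: "x = (U,V,W)" and h: "length U = a" "length V = b" "sorted V"
        "\<not> compat U V" unfolding NCs_def Tr_def by auto
      let ?j = "jf U V"
      have H: "Hc ?j U V" using Hc_jf[of V U] h assms by auto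
      have H2: "Hc ?j (fst (swp ?j U V)) (snd (swp ?j U V))" using swp_Hc[OF H h(3)] .
      have "jg (fst (swp ?j U V)) (snd (swp ?j U V)) = ?j" using jg_eq[OF H2] .
      then show "Gsw (Fsw x) = x" unfolding x Fsw_def Gsw_def using swp_swp[of ?j U V] H
        unfolding Hc_def by simp
    qed
    show "\<forall>y\<in>Tr (b-1) (a+1) k A. Fsw (Gsw y) = y"
    proof
      fix y assume "y \<in> Tr (b-1) (a+1) k A"
      then obtain U V W where y: "y = (U,V,W)" and h: "length U = b - 1" "length V = a + 1" "sorted V"
        unfolding Tr_def by auto
      let ?j = "jg U V"
      have H: "Hc ?j U V" using Hc_jg[of U V] h assms by auto
      have H2: "Hc ?j (fst (swp ?j U V)) (snd (swp ?j U V))" using swp_Hc[OF H h(3)] .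
      have j: "?j \<le> length U" "?j < length V" using H unfolding Hc_def by auto
      have "length (fst (swp ?j U V)) = a" using swp_len(1)[OF j] h by simp
      then have "?j < length (fst (swp ?j U V))" using j h assms by linarith
      then have "jf (fst (swp ?j U V)) (snd (swp ?j U V)) = ?j" using jf_eq[OF H2] by simp
      then show "Fsw (Gsw y) = y" unfolding y Fsw_def Gsw_def using swp_swp[of ?j U V] H
        unfolding Hc_def by simp
    qed
    show "Fsw ` NCs a b k A \<subseteq> Tr (b-1) (a+1) k A"
    proof
      fix z assume "z \<in> Fsw ` NCs a b k A"
      then obtain U V W where z: "z = Fsw (U,V,W)" and h: "length U = a" "length V = b" "length W = k"
        "sorted U" "sorted V" "sorted_wrt (<) W" "V!0 < W!0" "mset U + mset V + mset W = A"
        "\<not> compat U V" unfolding NCs_def Tr_def by auto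
      let ?j = "jf U V"
      have H: "Hc ?j U V" using Hc_jf[of V U] h assms by auto
      have j: "?j \<le> length U" "?j < length V" using H unfolding Hc_def by auto
      have s: "sorted (fst (swp ?j U V))" "sorted (snd (swp ?j U V))" using swp_sorted[OF H h(4,5)] by auto
      have l: "length (fst (swp ?j U V)) = b - 1" "length (snd (swp ?j U V)) = a + 1"
        using swp_len[OF j] h by auto
      have v0: "snd (swp ?j U V) ! 0 = V!0" using swp_nth(3)[OF j, of 0] by simp
      have m: "mset (fst (swp ?j U V)) + mset (snd (swp ?j U V)) + mset W = A" using swp_mset h(8) by simp
      show "z \<in> Tr (b-1) (a+1) k A" unfolding z Fsw_def Tr_def using s l v0 m h by auto
    qed
    show "Gsw ` Tr (b-1) (a+1) k A \<subseteq> NCs a b k A"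
    proof
      fix z assume "z \<in> Gsw ` Tr (b-1) (a+1) k A"
      then obtain U V W where z: "z = Gsw (U,V,W)" and h: "length U = b - 1" "length V = a + 1" "length W = k"
        "sorted U" "sorted V" "sorted_wrt (<) W" "V!0 < W!0" "mset U + mset V + mset W = A"
        unfolding Tr_def by auto
      let ?j = "jg U V"
      have H: "Hc ?j U V" using Hc_jg[of U V] h assms by auto
      have j: "?j \<le> length U" "?j < length V" using H unfolding Hc_def by auto
      have s: "sorted (fst (swp ?j U V))" "sorted (snd (swp ?j U V))" using swp_sorted[OF H h(4,5)] by auto
      have l: "length (fst (swp ?j U V)) = a" "length (snd (swp ?j U V)) = b"
        using swp_len[OF j] h assms by auto
      have v0: "snd (swp ?j U V) ! 0 = V!0" using swp_nth(3)[OF j, of 0] by simp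
      have m: "mset (fst (swp ?j U V)) + mset (snd (swp ?j U V)) + mset W = A" using swp_mset h(8) by simp
      have H2: "Hc ?j (fst (swp ?j U V)) (snd (swp ?j U V))" using swp_Hc[OF H h(5)] .
      have jl: "?j < length (fst (swp ?j U V))" using j l h assms by simp
      have nc: "\<not> compat (fst (swp ?j U V)) (snd (swp ?j U V))"
        using H2 jl unfolding Hc_def compat_def by (meson leD)
      show "z \<in> NCs a b k A" unfolding z Gsw_def NCs_def Tr_def using s l v0 m h nc by auto
    qed
  qed
  then show ?thesis by (rule bij_betw_same_card)
qed

lemma Bh_card: "R \<noteq> {#} \<Longrightarrow> card (Bh R) \<le> size R - 1"
proof -
  assume R: "R \<noteq> {#}"
  have "Min (set_mset R) \<in> set_mset R" using R by simp
  then have "card (Bh R) = card (set_mset R) - 1" unfolding Bh_def by (simp add: card_Diff_singleton)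
  then show ?thesis using card_set_mset_le[of R] by simp
qed

lemma subset_size_eq: "X \<subseteq># (R::nat multiset) \<Longrightarrow> size X = size R \<Longrightarrow> X = R"
proof -
  assume a: "X \<subseteq># R" "size X = size R"
  have "size (R - X) = 0" using a by (simp add: size_Diff_submset)
  then have "R - X = {#}" by simp
  moreover have "X + (R - X) = R" using a(1) by (rule subset_mset.add_diff_inverse)
  ultimately show "X = R" by simp
qed

lemma rep_subset_eq: "n \<le> count (R::nat multiset) x \<Longrightarrow> size R = n \<Longrightarrow> R = replicate_mset n x"
proof -
  assume a: "n \<le> count R x" "size R = n"
  have "replicate_mset n x \<subseteq># R" using count_le_replicate_mset_subset_eq[THEN iffD1, OF a(1)] .
  then show ?thesis using subset_size_eq[of "replicate_mset n x" R] a(2) by simp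
qed

lemma Bh_empty_iff:
  assumes "size R = n" "0 < n"
  shows "Bh R = {} \<longleftrightarrow> (\<exists>x. n \<le> count R x)"
proof
  assume "Bh R = {}"
  then have "set_mset R \<subseteq> {Min (set_mset R)}" unfolding Bh_def by auto
  then have "R = replicate_mset (size R) (Min (set_mset R))" by (rule set_mset_subset_singletonD)
  then have "count R (Min (set_mset R)) = count (replicate_mset (size R) (Min (set_mset R))) (Min (set_mset R))"
    by (rule arg_cong[where f="\<lambda>X. count X (Min (set_mset R))"])
  then have "count R (Min (set_mset R)) = n" using assms(1) by simp
  then show "\<exists>x. n \<le> count R x" by auto
next
  assume "\<exists>x. n \<le> count R x"
  then obtain x where x: "n \<le> count R x" by auto
  have "R = replicate_mset n x" using rep_subset_eq[OF x assms(1)] .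
  then have "set_mset R = {x}" using assms(2) by simp
  then show "Bh R = {}" unfolding Bh_def by simp
qed

lemma count_two_le: "x \<noteq> y \<Longrightarrow> count A x + count A y \<le> size A"
proof -
  assume xy: "x \<noteq> y"
  have "count A x + count A y = (\<Sum>z\<in>{x,y}. count A z)" using xy by simp
  also have "\<dots> = (\<Sum>z\<in>{x,y} \<inter> set_mset A. count A z)"
    by (rule sum.mono_neutral_right) auto
  also have "\<dots> \<le> (\<Sum>z\<in>set_mset A. count A z)"
    by (rule sum_mono2) auto
  also have "\<dots> = size A" by (simp add: size_multiset_overloaded_eq)
  finally show ?thesis .
qed

lemma finite_big: "0 < n \<Longrightarrow> finite {x. n \<le> count A x}"
proof (rule finite_subset[of _ "set_mset A"])
  assume n: "0 < n"
  show "{x. n \<le> count A x} \<subseteq> set_mset A"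
  proof
    fix x assume "x \<in> {x. n \<le> count A x}"
    then have "count A x \<noteq> 0" using n by simp
    then show "x \<in># A" using not_in_iff by metis
  qed
qed simp

lemma big_count_card:
  assumes "size A < 2 * n" "0 < n"
  shows "card {x. n \<le> count A x} \<le> 1"
proof -
  have "\<forall>x\<in>{x. n \<le> count A x}. \<forall>y\<in>{x. n \<le> count A x}. x = y"
  proof (intro ballI, rule ccontr)
    fix x y assume x: "x \<in> {x. n \<le> count A x}" and y: "y \<in> {x. n \<le> count A x}" and xy: "x \<noteq> y"
    have "count A x + count A y \<le> size A" using count_two_le[OF xy] .
    then show False using x y assms by simp
  qed
  moreover have "finite {x. n \<le> count A x}"
  proof (rule finite_subset[of _ "set_mset A"])
    show "{x. n \<le> count A x} \<subseteq> set_mset A"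
    proof
      fix x assume "x \<in> {x. n \<le> count A x}"
      then have "count A x \<noteq> 0" using assms(2) by simp
      then show "x \<in># A" using not_in_iff by metis
    qed
  qed simp
  ultimately show ?thesis using card_le_Suc0_iff_eq[of "{x. n \<le> count A x}"] by simp
qed

lemma L2:
  assumes "size A = 2*n - 1" "2 \<le> n"
  shows "card {M \<in> Ms (n-1) A. Bh (A - M) = {}} = card {x. n \<le> count A x}"
proof -
  let ?h = "\<lambda>x. A - replicate_mset n x"
  have eq: "{M \<in> Ms (n-1) A. Bh (A - M) = {}} = ?h ` {x. n \<le> count A x}"
  proof
    show "{M \<in> Ms (n-1) A. Bh (A - M) = {}} \<subseteq> ?h ` {x. n \<le> count A x}"
    proof
      fix M assume M: "M \<in> {M \<in> Ms (n-1) A. Bh (A - M) = {}}"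
      then have sub: "M \<subseteq># A" "size M = n - 1" "Bh (A - M) = {}" unfolding Ms_def by auto
      have sz: "size (A - M) = n" using sub assms by (simp add: size_Diff_submset)
      obtain x where x: "n \<le> count (A - M) x" using Bh_empty_iff[OF sz] sub(3) assms by auto
      have AM: "A - M = replicate_mset n x" using rep_subset_eq[OF x sz] .
      have "M = A - (A - M)" using sub(1) by (simp add: subset_mset.diff_diff_right)
      then have "M = ?h x" using AM by simp
      moreover have "n \<le> count A x"
      proof -
        have "count (A - M) x \<le> count A x" by simp
        then show ?thesis using x by linarith
      qed
      ultimately show "M \<in> ?h ` {x. n \<le> count A x}" by auto
    qed
    show "?h ` {x. n \<le> count A x} \<subseteq> {M \<in> Ms (n-1) A. Bh (A - M) = {}}"
    proof
      fix M assume "M \<in> ?h ` {x. n \<le> count A x}"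
      then obtain x where M: "M = ?h x" and x: "n \<le> count A x" by auto
      have r: "replicate_mset n x \<subseteq># A" using count_le_replicate_mset_subset_eq[THEN iffD1, OF x[simplified]] .
      have "A - M = replicate_mset n x" unfolding M using r by (simp add: subset_mset.diff_diff_right)
      then have "Bh (A - M) = {}" using assms unfolding Bh_def by simp
      moreover have "size M = n - 1" unfolding M using r assms by (simp add: size_Diff_submset)
      moreover have "M \<subseteq># A" unfolding M by simp
      ultimately show "M \<in> {M \<in> Ms (n-1) A. Bh (A - M) = {}}" unfolding Ms_def by auto
    qed
  qed
  have inj: "inj_on ?h {x. n \<le> count A x}"
  proof
    fix x y assume x: "x \<in> {x. n \<le> count A x}" and y: "y \<in> {x. n \<le> count A x}" and e: "?h x = ?h y"
    have rx: "replicate_mset n x \<subseteq># A" using count_le_replicate_mset_subset_eq[THEN iffD1, OF x[simplified]] .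
    have ry: "replicate_mset n y \<subseteq># A" using count_le_replicate_mset_subset_eq[THEN iffD1, OF y[simplified]] .
    have "replicate_mset n x = A - ?h x" using rx by (simp add: subset_mset.diff_diff_right)
    also have "\<dots> = A - ?h y" using e by simp
    also have "\<dots> = replicate_mset n y" using ry by (simp add: subset_mset.diff_diff_right)
    finally have "replicate_mset n x = replicate_mset n y" .
    moreover have "x \<in># replicate_mset n x" using assms(2) by simp
    ultimately have "x \<in># replicate_mset n y" by simp
    then show "x = y" by (auto split: if_splits)
  qed
  show ?thesis unfolding eq using card_image[OF inj] .
qed

lemma L1:
  assumes "size A = 2*n - 1" "2 \<le> n"
  shows "card {M \<in> Ms (n-1) A. Bq A M = {}} = 1"
proof -
  define xs where "xs = sorted_list_of_multiset A"
  define M0 where "M0 = mset (take (n-1) xs)"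
  define D where "D = mset (drop (n-1) xs)"
  have sxs: "sorted xs" and mxs: "mset xs = A" unfolding xs_def by auto
  have "length xs = size (mset xs)" by simp
  then have lxs: "length xs = 2*n - 1" using assms mxs by simp
  have "M0 + D = mset (take (n-1) xs @ drop (n-1) xs)" unfolding M0_def D_def by (simp only: mset_append)
  then have split: "M0 + D = A" using mxs by simp
  have AM0: "A - M0 = D" using split[symmetric] by simp
  have M0sub: "M0 \<subseteq># A" using split[symmetric] by simp
  have M0size: "size M0 = n - 1" unfolding M0_def using lxs assms by simp
  have dne: "drop (n-1) xs \<noteq> []" using lxs assms by simp
  have "sorted (take (n-1) xs @ drop (n-1) xs)" using sxs by simp
  then have le: "\<forall>x\<in>set (take (n-1) xs). \<forall>y\<in>set (drop (n-1) xs). x \<le> y"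
    unfolding sorted_append by (elim conjE)
  have "Bq A M0 = {}"
  proof -
    have mn: "Min (set (drop (n-1) xs)) \<in> set (drop (n-1) xs)" using dne by simp
    have "\<forall>x\<in>set (take (n-1) xs). x \<le> Min (set (drop (n-1) xs))" using le mn by blast
    then show ?thesis unfolding Bq_def AM0 unfolding M0_def D_def set_mset_mset by (simp add: not_less)
  qed
  then have inM0: "M0 \<in> {M \<in> Ms (n-1) A. Bq A M = {}}" using M0sub M0size unfolding Ms_def by auto
  have uniq: "M = M0" if M: "M \<in> {M \<in> Ms (n-1) A. Bq A M = {}}" for M
  proof -
    have sub: "M \<subseteq># A" "size M = n - 1" "Bq A M = {}" using M unfolding Ms_def by auto
    have low: "\<forall>x\<in>#M. x \<le> Min (set_mset (A - M))" using sub(3) unfolding Bq_def by (auto simp: not_less)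
    define ys where "ys = sorted_list_of_multiset M @ sorted_list_of_multiset (A - M)"
    have mys: "mset ys = A" unfolding ys_def using sub(1) by simp
    have sys: "sorted ys" unfolding ys_def sorted_append
    proof (intro conjI ballI)
      fix x y assume x: "x \<in> set (sorted_list_of_multiset M)" and y: "y \<in> set (sorted_list_of_multiset (A - M))"
      have "x \<le> Min (set_mset (A - M))" using low x by simp
      also have "\<dots> \<le> y" using y by simp
      finally show "x \<le> y" .
    qed auto
    have "xs = sorted_list_of_multiset (mset ys)" unfolding xs_def mys ..
    also have "\<dots> = ys" using sorted_sort_id[OF sys] by simp
    finally have xy: "xs = ys" .
    have "length (sorted_list_of_multiset M) = size (mset (sorted_list_of_multiset M))" by (rule size_mset[symmetric])
    also have "\<dots> = size M" by simp
    finally have lM: "length (sorted_list_of_multiset M) = n - 1" using sub(2) by simp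
    have "take (n-1) xs = sorted_list_of_multiset M" unfolding xy ys_def using lM by simp
    then show "M = M0" unfolding M0_def by simp
  qed
  have "{M \<in> Ms (n-1) A. Bq A M = {}} = {M0}" using inM0 uniq by blast
  then show ?thesis by simp
qed

definition Trp :: "nat \<Rightarrow> nat \<Rightarrow> nat multiset \<Rightarrow> (nat list \<times> nat list \<times> nat list) set" where
  "Trp n k A = {x \<in> Tr (n-1) (n-k) k A. compat (fst x) (fst (snd x))}"

lemma finite_Tr: "finite (Tr a b k A)"
proof -
  have "Tr a b k A \<subseteq> {xs. set xs \<subseteq> set_mset A \<and> length xs = a} \<times>
        ({xs. set xs \<subseteq> set_mset A \<and> length xs = b} \<times> {xs. set xs \<subseteq> set_mset A \<and> length xs = k})"
    unfolding Tr_def by auto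
  then show ?thesis by (rule finite_subset) (auto intro!: finite_cartesian_product simp: finite_lists_in)
qed

lemma card_Trp:
  assumes "size A = 2*n - 1" "1 \<le> k" "k \<le> n - 1"
  shows "int (card (Trp n k A)) = int (\<Sum>M\<in>Ms (n-1) A. card {S. S \<subseteq> Bh (A - M) \<and> card S = k})
     - int (\<Sum>M\<in>Ms (n-1) A. card {S. S \<subseteq> Bq A M \<and> card S = k})"
proof -
  have part: "Tr (n-1) (n-k) k A = Trp n k A \<union> NCs (n-1) (n-k) k A"
    "Trp n k A \<inter> NCs (n-1) (n-k) k A = {}"
    unfolding Trp_def NCs_def by auto
  have fin: "finite (Trp n k A)" "finite (NCs (n-1) (n-k) k A)"
    using finite_Tr part(1) by (metis finite_Un)+
  have c1: "card (Tr (n-1) (n-k) k A) = card (Trp n k A) + card (NCs (n-1) (n-k) k A)"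
    using card_Un_disjoint[OF fin part(2)] part(1) by simp
  have c2: "card (NCs (n-1) (n-k) k A) = card (Tr (n-k-1) n k A)"
    using tail_swap[of "n-k" "n-1" k A] assms by simp
  have c3: "card (Tr (n-1) (n-k) k A) = (\<Sum>M\<in>Ms (n-1) A. card {S. S \<subseteq> Bh (A - M) \<and> card S = k})"
    by (rule tr_card_U) (use assms in auto)
  have c4: "card (Tr (n-k-1) n k A) = (\<Sum>M\<in>Ms (n-1) A. card {S. S \<subseteq> Bq A M \<and> card S = k})"
    using tr_card_UW[of A "n-k-1" n k] assms by simp
  define Ps where "Ps = (\<Sum>M\<in>Ms (n-1) A. card {S. S \<subseteq> Bh (A - M) \<and> card S = k})"
  define Qs where "Qs = (\<Sum>M\<in>Ms (n-1) A. card {S. S \<subseteq> Bq A M \<and> card S = k})"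
  have e: "card (Trp n k A) + Qs = Ps" using c1 c2 c3 c4 unfolding Ps_def Qs_def by linarith
  have "int Ps = int (card (Trp n k A)) + int Qs" using e by (metis of_nat_add)
  then have "int (card (Trp n k A)) = int Ps - int Qs" by linarith
  then show ?thesis unfolding Ps_def Qs_def .
qed

theorem count_main:
  assumes "size A = 2*n - 1" "2 \<le> n"
  shows "(\<Sum>k=1..n-1. (-1::int)^(k-1) * int (card (Trp n k A))) = (if \<exists>x. n \<le> count A x then 0 else 1)"
proof -
  let ?s = "\<lambda>k. (-1::int)^(k-1)"
  let ?P = "\<lambda>M k. int (card {S. S \<subseteq> Bh (A - M) \<and> card S = k})"
  let ?Q = "\<lambda>M k. int (card {S. S \<subseteq> Bq A M \<and> card S = k})"
  have "(\<Sum>k=1..n-1. ?s k * int (card (Trp n k A))) =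
        (\<Sum>k=1..n-1. ?s k * (\<Sum>M\<in>Ms (n-1) A. ?P M k) - ?s k * (\<Sum>M\<in>Ms (n-1) A. ?Q M k))"
    by (rule sum.cong[OF refl]) (use card_Trp[OF assms(1)] in \<open>auto simp: right_diff_distrib\<close>)
  also have "\<dots> = (\<Sum>k=1..n-1. \<Sum>M\<in>Ms (n-1) A. ?s k * ?P M k) - (\<Sum>k=1..n-1. \<Sum>M\<in>Ms (n-1) A. ?s k * ?Q M k)"
    by (simp add: sum_subtractf sum_distrib_left)
  also have "\<dots> = (\<Sum>M\<in>Ms (n-1) A. \<Sum>k=1..n-1. ?s k * ?P M k) - (\<Sum>M\<in>Ms (n-1) A. \<Sum>k=1..n-1. ?s k * ?Q M k)"
    by (rule arg_cong2[where f="(-)"]; rule sum.swap)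
  also have "(\<Sum>M\<in>Ms (n-1) A. \<Sum>k=1..n-1. ?s k * ?P M k) = (\<Sum>M\<in>Ms (n-1) A. if Bh (A - M) = {} then 0 else 1)"
  proof (rule sum.cong[OF refl])
    fix M assume "M \<in> Ms (n-1) A"
    then have sz: "size (A - M) = n" using assms unfolding Ms_def by (auto simp: size_Diff_submset)
    then have "A - M \<noteq> {#}" using assms by auto
    then have "card (Bh (A - M)) \<le> n - 1" using Bh_card sz by fastforce
    moreover have "finite (Bh (A - M))" unfolding Bh_def by simp
    ultimately show "(\<Sum>k=1..n-1. ?s k * ?P M k) = (if Bh (A - M) = {} then 0 else 1)"
      using alt_subset_sum by blast
  qed
  also have "(\<Sum>M\<in>Ms (n-1) A. \<Sum>k=1..n-1. ?s k * ?Q M k) = (\<Sum>M\<in>Ms (n-1) A. if Bq A M = {} then 0 else 1)"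
  proof (rule sum.cong[OF refl])
    fix M assume M: "M \<in> Ms (n-1) A"
    have "card (Bq A M) \<le> card (set_mset M)" unfolding Bq_def by (rule card_mono) auto
    also have "\<dots> \<le> n - 1" using card_set_mset_le[of M] M unfolding Ms_def by simp
    finally have "card (Bq A M) \<le> n - 1" .
    moreover have "finite (Bq A M)" unfolding Bq_def by simp
    ultimately show "(\<Sum>k=1..n-1. ?s k * ?Q M k) = (if Bq A M = {} then 0 else 1)"
      using alt_subset_sum by blast
  qed
  also have "(\<Sum>M\<in>Ms (n-1) A. if Bh (A - M) = {} then 0 else (1::int)) - (\<Sum>M\<in>Ms (n-1) A. if Bq A M = {} then 0 else 1)
      = int (card {M \<in> Ms (n-1) A. Bq A M = {}}) - int (card {M \<in> Ms (n-1) A. Bh (A - M) = {}})"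
  proof -
    have g: "\<And>B::nat multiset \<Rightarrow> nat set. (\<Sum>M\<in>Ms (n-1) A. if B M = {} then 0 else (1::int)) = int (card (Ms (n-1) A)) - int (card {M \<in> Ms (n-1) A. B M = {}})"
    proof -
      fix B :: "nat multiset \<Rightarrow> nat set"
      have "(\<Sum>M\<in>Ms (n-1) A. if B M = {} then 0 else (1::int)) = (\<Sum>M\<in>Ms (n-1) A. 1 - (if B M = {} then 1 else 0))"
        by (rule sum.cong) auto
      also have "\<dots> = int (card (Ms (n-1) A)) - (\<Sum>M\<in>Ms (n-1) A. if B M = {} then 1 else 0)"
        by (simp add: sum_subtractf)
      also have "(\<Sum>M\<in>Ms (n-1) A. if B M = {} then 1 else (0::int)) = int (card {M \<in> Ms (n-1) A. B M = {}})"
        using finite_Ms by (simp add: sum.If_cases Collect_conj_eq Int_commute)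
      finally show "(\<Sum>M\<in>Ms (n-1) A. if B M = {} then 0 else (1::int)) = int (card (Ms (n-1) A)) - int (card {M \<in> Ms (n-1) A. B M = {}})" .
    qed
    show ?thesis using g[of "\<lambda>M. Bh (A - M)"] g[of "Bq A"] by simp
  qed
  also have "\<dots> = 1 - int (card {x. n \<le> count A x})" using L1[OF assms] L2[OF assms] by simp
  also have "\<dots> = (if \<exists>x. n \<le> count A x then 0 else 1)"
  proof -
    have "card {x. n \<le> count A x} \<le> 1" using assms by (intro big_count_card) auto
    moreover have "(\<exists>x. n \<le> count A x) \<longleftrightarrow> card {x. n \<le> count A x} \<noteq> 0"
    proof -
      have "finite {x. n \<le> count A x}" using assms by (intro finite_big) simp
      then show ?thesis by auto
    qed
    ultimately show ?thesis by auto
  qed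
  finally show ?thesis .
qed

theorem count_hook:
  assumes "size A = n" "2 \<le> n"
  shows "(\<Sum>k=1..n-1. (-1::int)^(k-1) * int (card (HS A (n-k) k))) = (if \<exists>x. n \<le> count A x then 0 else 1)"
proof -
  have "(\<Sum>k=1..n-1. (-1::int)^(k-1) * int (card (HS A (n-k) k))) =
        (\<Sum>k=1..n-1. (-1::int)^(k-1) * int (card {S. S \<subseteq> Bh A \<and> card S = k}))"
    by (rule sum.cong[OF refl]) (use HS_card assms in auto)
  also have "\<dots> = (if Bh A = {} then 0 else 1)"
  proof (rule alt_subset_sum)
    show "finite (Bh A)" unfolding Bh_def by simp
    show "card (Bh A) \<le> n - 1" using Bh_card[of A] assms by fastforce
  qed
  also have "\<dots> = (if \<exists>x. n \<le> count A x then 0 else 1)" using Bh_empty_iff[of A n] assms by simp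
  finally show ?thesis .
qed

definition sh3 :: "nat \<Rightarrow> nat \<Rightarrow> nat \<Rightarrow> nat list" where
  "sh3 a b k = [a, b] @ replicate k 1"

definition tab3 :: "nat list \<Rightarrow> nat list \<Rightarrow> nat list \<Rightarrow> nat \<times> nat \<Rightarrow> nat" where
  "tab3 U V W = (\<lambda>(r,c). if r = 0 then (if c < length U then U!c else 0)
      else if r = 1 then (if c < length V then V!c else 0)
      else if c = 0 \<and> r - 2 < length W then W!(r-2) else 0)"

lemma cells3: "(r,c) \<in> cells (sh3 a b k) \<longleftrightarrow> (r = 0 \<and> c < a) \<or> (r = 1 \<and> c < b) \<or> (2 \<le> r \<and> r < k + 2 \<and> c = 0)"
proof (cases r)
  case 0 then show ?thesis by (simp add: cells_def sh3_def)
next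
  case (Suc m)
  then show ?thesis
  proof (cases m)
    case 0 then show ?thesis using Suc by (simp add: cells_def sh3_def)
  next
    case (Suc q)
    then show ?thesis using \<open>r = Suc m\<close> by (auto simp: cells_def sh3_def nth_append)
  qed
qed

lemma count_mset_card: "count (mset xs) x = card {j. j < length xs \<and> xs!j = x}"
  by (simp add: count_mset count_list_eq_length_filter length_filter_conv_card eq_commute)

lemma content3:
  assumes "length U = a" "length V = b" "length W = k"
  shows "card {c \<in> cells (sh3 a b k). tab3 U V W c = x} = count (mset U + mset V + mset W) x"
proof -
  let ?I1 = "{j. j < a \<and> U!j = x}" and ?I2 = "{j. j < b \<and> V!j = x}" and ?I3 = "{i. i < k \<and> W!i = x}"
  have eq: "{c \<in> cells (sh3 a b k). tab3 U V W c = x} =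
      ((\<lambda>j. (0,j)) ` ?I1 \<union> (\<lambda>j. (1,j)) ` ?I2) \<union> (\<lambda>i. (i+2,0)) ` ?I3"
  proof (rule set_eqI)
    fix c :: "nat \<times> nat"
    obtain r q where c: "c = (r,q)" by fastforce
    show "c \<in> {c \<in> cells (sh3 a b k). tab3 U V W c = x} \<longleftrightarrow>
      c \<in> ((\<lambda>j. (0,j)) ` ?I1 \<union> (\<lambda>j. (1,j)) ` ?I2) \<union> (\<lambda>i. (i+2,0)) ` ?I3"
    proof (cases "r < 2")
      case True
      then have "r = 0 \<or> r = 1" by auto
      then show ?thesis unfolding c using assms by (auto simp: tab3_def image_iff cells3)
    next
      case False
      then obtain i where r: "r = i + 2" by (metis add.commute le_Suc_ex not_less)
      show ?thesis unfolding c r using assms by (auto simp: tab3_def image_iff cells3)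
    qed
  qed
  define X1 where "X1 = (\<lambda>j. (0::nat,j)) ` ?I1"
  define X2 where "X2 = (\<lambda>j. (1::nat,j)) ` ?I2"
  define X3 where "X3 = (\<lambda>i. (i+2,0::nat)) ` ?I3"
  have f: "finite X1" "finite X2" "finite X3" unfolding X1_def X2_def X3_def by auto
  have d1: "X1 \<inter> X2 = {}" unfolding X1_def X2_def by auto
  have d2: "(X1 \<union> X2) \<inter> X3 = {}" unfolding X1_def X2_def X3_def by auto
  have c1: "card X1 = card ?I1" unfolding X1_def by (rule card_image) (simp add: inj_on_def)
  have c2: "card X2 = card ?I2" unfolding X2_def by (rule card_image) (simp add: inj_on_def)
  have c3: "card X3 = card ?I3" unfolding X3_def by (rule card_image) (simp add: inj_on_def)
  have "card {c \<in> cells (sh3 a b k). tab3 U V W c = x} = card ((X1 \<union> X2) \<union> X3)"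
    unfolding eq X1_def X2_def X3_def ..
  also have "\<dots> = card X1 + card X2 + card X3"
    using card_Un_disjoint[OF _ _ d2] card_Un_disjoint[OF _ _ d1] f by simp
  also have "\<dots> = card ?I1 + card ?I2 + card ?I3" using c1 c2 c3 by simp
  also have "\<dots> = count (mset U + mset V + mset W) x"
    using assms by (simp add: count_mset_card)
  finally show ?thesis .
qed

lemma ss2: "r \<noteq> 0 \<Longrightarrow> r \<noteq> Suc 0 \<Longrightarrow> Suc (Suc (r - 2)) = r" by arith

definition TS3 :: "nat \<Rightarrow> nat \<Rightarrow> nat \<Rightarrow> (nat \<Rightarrow> nat) \<Rightarrow> (nat list \<times> nat list \<times> nat list) set" where
  "TS3 a b k alpha = {(U,V,W). length U = a \<and> length V = b \<and> length W = k \<and> sorted U \<and> sorted V \<and>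
      sorted_wrt (<) W \<and> V!0 < W!0 \<and> compat U V \<and> (\<forall>x. count (mset U + mset V + mset W) x = alpha x)}"

lemma ssyt3:
  assumes "b \<le> a" "0 < b" "0 < k"
  shows "card (ssyt (sh3 a b k) alpha) = card (TS3 a b k alpha)"
proof -
  let ?t = "\<lambda>(U,V,W). tab3 U V W"
  have inj: "inj_on ?t (TS3 a b k alpha)"
  proof (rule inj_onI)
    fix x y assume x: "x \<in> TS3 a b k alpha" and y: "y \<in> TS3 a b k alpha" and e: "?t x = ?t y"
    obtain U V W where xx: "x = (U,V,W)" using prod_cases3 by blast
    obtain U' V' W' where yy: "y = (U',V',W')" using prod_cases3 by blast
    have l: "length U = a" "length V = b" "length W = k" "length U' = a" "length V' = b" "length W' = k"
      using x y unfolding xx yy TS3_def by auto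
    have e2: "tab3 U V W = tab3 U' V' W'" using e unfolding xx yy by simp
    have "U = U'"
    proof (rule nth_equalityI)
      show "length U = length U'" using l by simp
      fix j assume "j < length U"
      then show "U!j = U'!j" using fun_cong[OF e2, of "(0,j)"] l by (simp add: tab3_def)
    qed
    moreover have "V = V'"
    proof (rule nth_equalityI)
      show "length V = length V'" using l by simp
      fix j assume "j < length V"
      then show "V!j = V'!j" using fun_cong[OF e2, of "(1,j)"] l by (simp add: tab3_def)
    qed
    moreover have "W = W'"
    proof (rule nth_equalityI)
      show "length W = length W'" using l by simp
      fix j assume "j < length W"
      then show "W!j = W'!j" using fun_cong[OF e2, of "(j+2,0)"] l by (simp add: tab3_def)
    qed
    ultimately show "x = y" unfolding xx yy by simp
  qed
  have img: "?t ` TS3 a b k alpha = ssyt (sh3 a b k) alpha"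
  proof
    show "?t ` TS3 a b k alpha \<subseteq> ssyt (sh3 a b k) alpha"
    proof
      fix T assume "T \<in> ?t ` TS3 a b k alpha"
      then obtain U V W where T: "T = tab3 U V W" and h: "length U = a" "length V = b" "length W = k"
        "sorted U" "sorted V" "sorted_wrt (<) W" "V!0 < W!0" "compat U V"
        "\<forall>x. count (mset U + mset V + mset W) x = alpha x"
        unfolding TS3_def by auto
      have z: "\<forall>c. c \<notin> cells (sh3 a b k) \<longrightarrow> T c = 0"
      proof (intro allI impI)
        fix c assume "c \<notin> cells (sh3 a b k)"
        moreover obtain r q where "c = (r,q)" by fastforce
        ultimately show "T c = 0" unfolding T using h(1-3) by (auto simp: cells3 tab3_def)
      qed
      have rw: "\<forall>i j. (i, Suc j) \<in> cells (sh3 a b k) \<longrightarrow> T (i, j) \<le> T (i, Suc j)"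
      proof (intro allI impI)
        fix i j assume "(i, Suc j) \<in> cells (sh3 a b k)"
        then have "(i = 0 \<and> Suc j < a) \<or> (i = 1 \<and> Suc j < b)" unfolding cells3 by auto
        then show "T (i, j) \<le> T (i, Suc j)" unfolding T using h(1,2,4,5)
          by (auto simp: tab3_def sorted_iff_nth_Suc)
      qed
      have cl: "\<forall>i j. (Suc i, j) \<in> cells (sh3 a b k) \<longrightarrow> T (i, j) < T (Suc i, j)"
      proof (intro allI impI)
        fix i j assume "(Suc i, j) \<in> cells (sh3 a b k)"
        then have "(i = 0 \<and> j < b) \<or> (i = 1 \<and> j = 0) \<or> (2 \<le> i \<and> Suc i < k + 2 \<and> j = 0)"
          unfolding cells3 by auto
        then show "T (i, j) < T (Suc i, j)"
        proof (elim disjE)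
          assume "i = 0 \<and> j < b"
          then show ?thesis unfolding T using h(1,2,8) assms(1) by (auto simp: tab3_def compat_def)
        next
          assume "i = 1 \<and> j = 0"
          then show ?thesis unfolding T using h(2,3,7) assms by (auto simp: tab3_def)
        next
          assume i: "2 \<le> i \<and> Suc i < k + 2 \<and> j = 0"
          then have "Suc (i-2) < k" by arith
          then have "W!(i-2) < W!(Suc (i-2))" using h(3,6) by (simp add: sorted_wrt_iff_nth_less)
          moreover have "Suc i - 2 = Suc (i - 2)" using i by arith
          ultimately show ?thesis unfolding T using i h(3) by (auto simp: tab3_def)
        qed
      qed
      have ct: "\<forall>x. card {c \<in> cells (sh3 a b k). T c = x} = alpha x"
        unfolding T using content3[OF h(1-3)] h(9) by simp
      show "T \<in> ssyt (sh3 a b k) alpha" unfolding ssyt_def using z rw cl ct by blast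
    qed
    show "ssyt (sh3 a b k) alpha \<subseteq> ?t ` TS3 a b k alpha"
    proof
      fix T assume T: "T \<in> ssyt (sh3 a b k) alpha"
      have z: "\<And>c. c \<notin> cells (sh3 a b k) \<Longrightarrow> T c = 0" using T unfolding ssyt_def by blast
      have rw: "\<And>i j. (i, Suc j) \<in> cells (sh3 a b k) \<Longrightarrow> T (i, j) \<le> T (i, Suc j)" using T unfolding ssyt_def by blast
      have cl: "\<And>i j. (Suc i, j) \<in> cells (sh3 a b k) \<Longrightarrow> T (i, j) < T (Suc i, j)" using T unfolding ssyt_def by blast
      have ct: "\<And>x. card {c \<in> cells (sh3 a b k). T c = x} = alpha x" using T unfolding ssyt_def by blast
      define U where "U = map (\<lambda>j. T (0,j)) [0..<a]"
      define V where "V = map (\<lambda>j. T (1,j)) [0..<b]"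
      define W where "W = map (\<lambda>i. T (i+2,0)) [0..<k]"
      have l: "length U = a" "length V = b" "length W = k" unfolding U_def V_def W_def by auto
      have TT: "T = tab3 U V W"
      proof
        fix c :: "nat \<times> nat"
        obtain r q where c: "c = (r,q)" by fastforce
        show "T c = tab3 U V W c"
        proof (cases "c \<in> cells (sh3 a b k)")
          case True
          then show ?thesis unfolding c cells3 using l
            by (auto simp: tab3_def U_def V_def W_def ss2)
        next
          case False
          then show ?thesis using z[OF False] unfolding c cells3 using l
            by (auto simp: tab3_def)
        qed
      qed
      have sU: "sorted U" unfolding sorted_iff_nth_Suc
      proof (intro allI impI)
        fix i assume "Suc i < length U"
        then show "U!i \<le> U!Suc i" using rw[of 0 i] l unfolding U_def by (simp add: cells3)
      qed
      have sV: "sorted V" unfolding sorted_iff_nth_Suc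
      proof (intro allI impI)
        fix i assume "Suc i < length V"
        then show "V!i \<le> V!Suc i" using rw[of 1 i] l unfolding V_def by (simp add: cells3)
      qed
      have sW: "sorted_wrt (<) W"
        unfolding sorted_wrt_iff_nth_Suc_transp[of "(<)", OF transp_on_less]
      proof (intro allI impI)
        fix i assume "Suc i < length W"
        then show "W!i < W!Suc i" using cl[of "i+2" 0] l unfolding W_def by (simp add: cells3)
      qed
      have vw: "V!0 < W!0" using cl[of 1 0] l assms unfolding V_def W_def by (simp add: cells3)
      have cp: "compat U V" unfolding compat_def
      proof (intro allI impI)
        fix j assume "j < length V"
        then show "U!j < V!j" using cl[of 0 j] l assms unfolding U_def V_def by (simp add: cells3)
      qed
      have cn: "\<forall>x. count (mset U + mset V + mset W) x = alpha x"
        using content3[OF l] ct unfolding TT[symmetric] by simp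
      have "(U,V,W) \<in> TS3 a b k alpha" unfolding TS3_def using l sU sV sW vw cp cn by auto
      then show "T \<in> ?t ` TS3 a b k alpha" using TT by force
    qed
  qed
  show ?thesis using card_image[OF inj] img by simp
qed

definition shh :: "nat \<Rightarrow> nat \<Rightarrow> nat list" where
  "shh b k = [b] @ replicate k 1"

definition tabh :: "nat list \<Rightarrow> nat list \<Rightarrow> nat \<times> nat \<Rightarrow> nat" where
  "tabh V W = (\<lambda>(r,c). if r = 0 then (if c < length V then V!c else 0)
      else if c = 0 \<and> r - 1 < length W then W!(r-1) else 0)"

lemma cellsh: "(r,c) \<in> cells (shh b k) \<longleftrightarrow> (r = 0 \<and> c < b) \<or> (1 \<le> r \<and> r < k + 1 \<and> c = 0)"
proof (cases r)
  case 0 then show ?thesis by (simp add: cells_def shh_def)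
next
  case (Suc m)
  then show ?thesis by (auto simp: cells_def shh_def nth_append)
qed

lemma contenth:
  assumes "length V = b" "length W = k"
  shows "card {c \<in> cells (shh b k). tabh V W c = x} = count (mset V + mset W) x"
proof -
  let ?I2 = "{j. j < b \<and> V!j = x}" and ?I3 = "{i. i < k \<and> W!i = x}"
  have eq: "{c \<in> cells (shh b k). tabh V W c = x} =
      (\<lambda>j. (0,j)) ` ?I2 \<union> (\<lambda>i. (i+1,0)) ` ?I3"
  proof (rule set_eqI)
    fix c :: "nat \<times> nat"
    obtain r q where c: "c = (r,q)" by fastforce
    show "c \<in> {c \<in> cells (shh b k). tabh V W c = x} \<longleftrightarrow>
      c \<in> (\<lambda>j. (0,j)) ` ?I2 \<union> (\<lambda>i. (i+1,0)) ` ?I3"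
    proof (cases "r = 0")
      case True
      then show ?thesis unfolding c using assms by (auto simp: tabh_def image_iff cellsh)
    next
      case False
      then obtain i where r: "r = i + 1" by (metis Suc_eq_plus1 not0_implies_Suc)
      show ?thesis unfolding c r using assms by (auto simp: tabh_def image_iff cellsh)
    qed
  qed
  define X2 where "X2 = (\<lambda>j. (0::nat,j)) ` ?I2"
  define X3 where "X3 = (\<lambda>i. (i+1,0::nat)) ` ?I3"
  have f: "finite X2" "finite X3" unfolding X2_def X3_def by auto
  have d: "X2 \<inter> X3 = {}" unfolding X2_def X3_def by auto
  have c2: "card X2 = card ?I2" unfolding X2_def by (rule card_image) (simp add: inj_on_def)
  have c3: "card X3 = card ?I3" unfolding X3_def by (rule card_image) (simp add: inj_on_def)
  have "card {c \<in> cells (shh b k). tabh V W c = x} = card (X2 \<union> X3)"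
    unfolding eq X2_def X3_def ..
  also have "\<dots> = card X2 + card X3"
    using card_Un_disjoint[OF _ _ d] f by simp
  also have "\<dots> = card ?I2 + card ?I3" using c2 c3 by simp
  also have "\<dots> = count (mset V + mset W) x"
    using assms by (simp add: count_mset_card)
  finally show ?thesis .
qed

definition TSh :: "nat \<Rightarrow> nat \<Rightarrow> (nat \<Rightarrow> nat) \<Rightarrow> (nat list \<times> nat list) set" where
  "TSh b k alpha = {(V,W). length V = b \<and> length W = k \<and> sorted V \<and>
      sorted_wrt (<) W \<and> V!0 < W!0 \<and> (\<forall>x. count (mset V + mset W) x = alpha x)}"

lemma ss1: "r \<noteq> 0 \<Longrightarrow> Suc (r - 1) = r" by arith

lemma ssyth:
  assumes "0 < b" "0 < k"
  shows "card (ssyt (shh b k) alpha) = card (TSh b k alpha)"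
proof -
  let ?t = "\<lambda>(V,W). tabh V W"
  have inj: "inj_on ?t (TSh b k alpha)"
  proof (rule inj_onI)
    fix x y assume x: "x \<in> TSh b k alpha" and y: "y \<in> TSh b k alpha" and e: "?t x = ?t y"
    obtain V W where xx: "x = (V,W)" by fastforce
    obtain V' W' where yy: "y = (V',W')" by fastforce
    have l: "length V = b" "length W = k" "length V' = b" "length W' = k"
      using x y unfolding xx yy TSh_def by auto
    have e2: "tabh V W = tabh V' W'" using e unfolding xx yy by simp
    have "V = V'"
    proof (rule nth_equalityI)
      show "length V = length V'" using l by simp
      fix j assume "j < length V"
      then show "V!j = V'!j" using fun_cong[OF e2, of "(0,j)"] l by (simp add: tabh_def)
    qed
    moreover have "W = W'"
    proof (rule nth_equalityI)
      show "length W = length W'" using l by simp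
      fix j assume "j < length W"
      then show "W!j = W'!j" using fun_cong[OF e2, of "(j+1,0)"] l by (simp add: tabh_def)
    qed
    ultimately show "x = y" unfolding xx yy by simp
  qed
  have img: "?t ` TSh b k alpha = ssyt (shh b k) alpha"
  proof
    show "?t ` TSh b k alpha \<subseteq> ssyt (shh b k) alpha"
    proof
      fix T assume "T \<in> ?t ` TSh b k alpha"
      then obtain V W where T: "T = tabh V W" and h: "length V = b" "length W = k"
        "sorted V" "sorted_wrt (<) W" "V!0 < W!0"
        "\<forall>x. count (mset V + mset W) x = alpha x"
        unfolding TSh_def by auto
      have z: "\<forall>c. c \<notin> cells (shh b k) \<longrightarrow> T c = 0"
      proof (intro allI impI)
        fix c assume "c \<notin> cells (shh b k)"
        moreover obtain r q where "c = (r,q)" by fastforce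
        ultimately show "T c = 0" unfolding T using h(1-2) by (auto simp: cellsh tabh_def)
      qed
      have rw: "\<forall>i j. (i, Suc j) \<in> cells (shh b k) \<longrightarrow> T (i, j) \<le> T (i, Suc j)"
      proof (intro allI impI)
        fix i j assume "(i, Suc j) \<in> cells (shh b k)"
        then have "i = 0 \<and> Suc j < b" unfolding cellsh by auto
        then show "T (i, j) \<le> T (i, Suc j)" unfolding T using h(1,3)
          by (auto simp: tabh_def sorted_iff_nth_Suc)
      qed
      have cl: "\<forall>i j. (Suc i, j) \<in> cells (shh b k) \<longrightarrow> T (i, j) < T (Suc i, j)"
      proof (intro allI impI)
        fix i j assume "(Suc i, j) \<in> cells (shh b k)"
        then have "(i = 0 \<and> j = 0) \<or> (1 \<le> i \<and> Suc i < k + 1 \<and> j = 0)"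
          unfolding cellsh by auto
        then show "T (i, j) < T (Suc i, j)"
        proof (elim disjE)
          assume "i = 0 \<and> j = 0"
          then show ?thesis unfolding T using h(1,2,5) assms by (auto simp: tabh_def)
        next
          assume i: "1 \<le> i \<and> Suc i < k + 1 \<and> j = 0"
          then have "Suc (i-1) < k" by arith
          then have "W!(i-1) < W!(Suc (i-1))" using h(2,4) by (simp add: sorted_wrt_iff_nth_less)
          moreover have "Suc i - 1 = Suc (i - 1)" using i by arith
          ultimately show ?thesis unfolding T using i h(2) by (auto simp: tabh_def)
        qed
      qed
      have ct: "\<forall>x. card {c \<in> cells (shh b k). T c = x} = alpha x"
        unfolding T using contenth[OF h(1-2)] h(6) by simp
      show "T \<in> ssyt (shh b k) alpha" unfolding ssyt_def using z rw cl ct by blast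
    qed
    show "ssyt (shh b k) alpha \<subseteq> ?t ` TSh b k alpha"
    proof
      fix T assume T: "T \<in> ssyt (shh b k) alpha"
      have z: "\<And>c. c \<notin> cells (shh b k) \<Longrightarrow> T c = 0" using T unfolding ssyt_def by blast
      have rw: "\<And>i j. (i, Suc j) \<in> cells (shh b k) \<Longrightarrow> T (i, j) \<le> T (i, Suc j)" using T unfolding ssyt_def by blast
      have cl: "\<And>i j. (Suc i, j) \<in> cells (shh b k) \<Longrightarrow> T (i, j) < T (Suc i, j)" using T unfolding ssyt_def by blast
      have ct: "\<And>x. card {c \<in> cells (shh b k). T c = x} = alpha x" using T unfolding ssyt_def by blast
      define V where "V = map (\<lambda>j. T (0,j)) [0..<b]"
      define W where "W = map (\<lambda>i. T (i+1,0)) [0..<k]"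
      have l: "length V = b" "length W = k" unfolding V_def W_def by auto
      have TT: "T = tabh V W"
      proof
        fix c :: "nat \<times> nat"
        obtain r q where c: "c = (r,q)" by fastforce
        show "T c = tabh V W c"
        proof (cases "c \<in> cells (shh b k)")
          case True
          then show ?thesis unfolding c cellsh using l
            by (auto simp: tabh_def V_def W_def ss1)
        next
          case False
          then show ?thesis using z[OF False] unfolding c cellsh using l
            by (auto simp: tabh_def)
        qed
      qed
      have sV: "sorted V" unfolding sorted_iff_nth_Suc
      proof (intro allI impI)
        fix i assume "Suc i < length V"
        then show "V!i \<le> V!Suc i" using rw[of 0 i] l unfolding V_def by (simp add: cellsh)
      qed
      have sW: "sorted_wrt (<) W"
        unfolding sorted_wrt_iff_nth_Suc_transp[of "(<)", OF transp_on_less]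
      proof (intro allI impI)
        fix i assume "Suc i < length W"
        then show "W!i < W!Suc i" using cl[of "i+1" 0] l unfolding W_def by (simp add: cellsh)
      qed
      have vw: "V!0 < W!0" using cl[of 0 0] l assms unfolding V_def W_def by (simp add: cellsh)
      have cn: "\<forall>x. count (mset V + mset W) x = alpha x"
        using contenth[OF l] ct unfolding TT[symmetric] by simp
      have "(V,W) \<in> TSh b k alpha" unfolding TSh_def using l sV sW vw cn by auto
      then show "T \<in> ?t ` TSh b k alpha" using TT by force
    qed
  qed
  show ?thesis using card_image[OF inj] img by simp
qed

lemma length_le_sum: "0 \<notin> set xs \<Longrightarrow> length xs \<le> sum_list (xs::nat list)"
  by (induction xs) (auto simp: Suc_le_eq)

lemma finite_parts: "finite {lam. is_partition lam \<and> sum_list lam = N}"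
proof (rule finite_subset[OF _ finite_lists_length_le[of "{0..N}" N]])
  show "{lam. is_partition lam \<and> sum_list lam = N} \<subseteq> {xs. set xs \<subseteq> {0..N} \<and> length xs \<le> N}"
  proof
    fix lam assume "lam \<in> {lam. is_partition lam \<and> sum_list lam = N}"
    then have h: "0 \<notin> set lam" "sum_list lam = N" unfolding is_partition_def by auto
    have "set lam \<subseteq> {0..N}" using member_le_sum_list[of _ lam] h(2) by fastforce
    moreover have "length lam \<le> N" using length_le_sum[OF h(1)] h(2) by simp
    ultimately show "lam \<in> {xs. set xs \<subseteq> {0..N} \<and> length xs \<le> N}" by simp
  qed
qed simp

lemma part_unique:
  assumes "is_partition l1" "is_partition l2" "mset l1 = mset l2"
  shows "l1 = l2"
proof -
  have "sort (rev l2) = rev l1" using assms unfolding is_partition_def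
    by (intro properties_for_sort) auto
  moreover have "sort (rev l2) = rev l2" using assms(2) unfolding is_partition_def
    by (simp add: sorted_sort_id)
  ultimately show ?thesis by simp
qed

lemma part_le_hd: "is_partition (h # t) \<Longrightarrow> x \<in> set (h # t) \<Longrightarrow> x \<le> h"
  unfolding is_partition_def by (auto simp: sorted_append)

lemma sum_list_le_len: "(\<forall>x\<in>set xs. x \<le> m) \<Longrightarrow> sum_list (xs::nat list) \<le> length xs * m"
  by (induction xs) auto

lemma sum_take_le1: "(\<forall>x\<in>set xs. x \<le> m) \<Longrightarrow> sum_list (take k (xs::nat list)) \<le> k * m"
proof -
  assume a: "\<forall>x\<in>set xs. x \<le> m"
  have "sum_list (take k xs) \<le> length (take k xs) * m" using a sum_list_le_len[of "take k xs" m]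
    by (meson in_set_takeD)
  also have "\<dots> \<le> k * m" by simp
  finally show ?thesis .
qed

lemma sum_take_le2: "sum_list (take k (xs::nat list)) \<le> sum_list xs"
proof -
  have "sum_list xs = sum_list (take k xs) + sum_list (drop k xs)"
    by (metis append_take_drop_id sum_list_append)
  then show ?thesis by simp
qed

lemma dom_hd:
  assumes "is_partition lam" "dominated lam mu" "lam \<noteq> []" "mu \<noteq> []"
  shows "\<forall>x\<in>set lam. x \<le> hd mu"
proof -
  obtain h t where l: "lam = h # t" using assms(3) by (cases lam) auto
  obtain h' t' where m: "mu = h' # t'" using assms(4) by (cases mu) auto
  have "sum_list (take 1 lam) \<le> sum_list (take 1 mu)" using assms(2) unfolding dominated_def by blast
  then have "h \<le> h'" using l m by simp
  then show ?thesis using part_le_hd[of h t] assms(1) l m by fastforce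
qed

lemma dom1:
  assumes "is_partition lam" "sum_list lam = 2*n - 1" "1 \<le> n"
  shows "dominated lam [n-1, n-1, 1] \<longleftrightarrow> (\<forall>x\<in>set lam. x \<le> n-1)"
proof
  assume "dominated lam [n-1, n-1, 1]"
  moreover have "lam \<noteq> []" using assms by auto
  ultimately show "\<forall>x\<in>set lam. x \<le> n-1" using dom_hd[OF assms(1)] by fastforce
next
  assume a: "\<forall>x\<in>set lam. x \<le> n-1"
  show "dominated lam [n-1, n-1, 1]" unfolding dominated_def
  proof
    fix k
    have b1: "sum_list (take k lam) \<le> k * (n-1)" using sum_take_le1[OF a] .
    have b2: "sum_list (take k lam) \<le> 2*n - 1" using sum_take_le2[of k lam] assms(2) by simp
    show "sum_list (take k lam) \<le> sum_list (take k [n-1, n-1, 1])"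
    proof (cases k)
      case 0 then show ?thesis by simp
    next
      case (Suc k1)
      show ?thesis
      proof (cases k1)
        case 0 then show ?thesis using b1 Suc by simp
      next
        case (Suc k2)
        show ?thesis
        proof (cases k2)
          case 0 then show ?thesis using b1 \<open>k = Suc k1\<close> Suc by simp
        next
          case (Suc k3) then show ?thesis using b2 \<open>k = Suc k1\<close> \<open>k1 = Suc k2\<close> assms(3) by simp
        qed
      qed
    qed
  qed
qed

lemma dom2:
  assumes "is_partition lam" "sum_list lam = n" "1 \<le> n"
  shows "dominated lam [n-1, 1] \<longleftrightarrow> (\<forall>x\<in>set lam. x \<le> n-1)"
proof
  assume "dominated lam [n-1, 1]"
  moreover have "lam \<noteq> []" using assms by auto
  ultimately show "\<forall>x\<in>set lam. x \<le> n-1" using dom_hd[OF assms(1)] by fastforce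
next
  assume a: "\<forall>x\<in>set lam. x \<le> n-1"
  show "dominated lam [n-1, 1]" unfolding dominated_def
  proof
    fix k
    have b1: "sum_list (take k lam) \<le> k * (n-1)" using sum_take_le1[OF a] .
    have b2: "sum_list (take k lam) \<le> n" using sum_take_le2[of k lam] assms(2) by simp
    show "sum_list (take k lam) \<le> sum_list (take k [n-1, 1])"
    proof (cases k)
      case 0 then show ?thesis by simp
    next
      case (Suc k1)
      show ?thesis
      proof (cases k1)
        case 0 then show ?thesis using b1 Suc by simp
      next
        case (Suc k2) then show ?thesis using b2 \<open>k = Suc k1\<close> assms(3) by simp
      qed
    qed
  qed
qed

lemma lhs_value:
  assumes fin: "finite {i. alpha i \<noteq> 0}"
    and dom_iff: "\<And>lam. is_partition lam \<Longrightarrow> sum_list lam = N \<Longrightarrow> D lam \<longleftrightarrow> (\<forall>x\<in>set lam. x \<le> c)"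
  shows "(\<Sum>lam \<in> {lam. is_partition lam \<and> sum_list lam = N \<and> D lam}. monomial_sym lam alpha)
     = (if sum alpha {i. alpha i \<noteq> 0} = N \<and> (\<forall>i. alpha i \<le> c) then 1 else 0)"
proof -
  let ?S = "{i. alpha i \<noteq> 0}"
  let ?M = "image_mset alpha (mset_set ?S)"
  define lam0 where "lam0 = rev (sorted_list_of_multiset ?M)"
  have ml0: "mset lam0 = ?M" unfolding lam0_def by simp
  have sl0: "set lam0 = alpha ` ?S" unfolding lam0_def using fin by simp
  have p0: "is_partition lam0" unfolding is_partition_def lam0_def using fin by auto
  have s0: "sum_list lam0 = sum alpha ?S"
  proof -
    have "sum_list lam0 = sum_mset (mset lam0)" by (simp add: sum_mset_sum_list)
    also have "\<dots> = sum alpha ?S" unfolding ml0 by (simp add: sum_unfold_sum_mset)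
    finally show ?thesis .
  qed
  have ms: "monomial_sym lam alpha = (if lam = lam0 then 1 else 0)" if "is_partition lam" for lam
  proof -
    have "mset lam = ?M \<longleftrightarrow> lam = lam0" using part_unique[OF that p0] ml0 by auto
    then show ?thesis unfolding monomial_sym_def using fin by simp
  qed
  have fS: "finite {lam. is_partition lam \<and> sum_list lam = N \<and> D lam}"
    by (rule finite_subset[OF _ finite_parts[of N]]) auto
  have "(\<Sum>lam \<in> {lam. is_partition lam \<and> sum_list lam = N \<and> D lam}. monomial_sym lam alpha)
      = (\<Sum>lam \<in> {lam. is_partition lam \<and> sum_list lam = N \<and> D lam}. if lam = lam0 then 1 else 0)"
    by (rule sum.cong) (auto simp: ms)
  also have "\<dots> = (if lam0 \<in> {lam. is_partition lam \<and> sum_list lam = N \<and> D lam} then 1 else 0)"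
    using fS by (simp add: sum.delta')
  also have "(lam0 \<in> {lam. is_partition lam \<and> sum_list lam = N \<and> D lam}) \<longleftrightarrow>
      (sum alpha ?S = N \<and> (\<forall>i. alpha i \<le> c))"
  proof -
    have "(\<forall>x\<in>set lam0. x \<le> c) \<longleftrightarrow> (\<forall>i. alpha i \<le> c)" unfolding sl0
      by (metis (mono_tags, lifting) imageE image_eqI le0 mem_Collect_eq)
    then show ?thesis using p0 s0 dom_iff[OF p0] by auto
  qed
  finally show ?thesis by simp
qed

lemma infinite_rhs:
  assumes "\<not> finite {i. alpha i \<noteq> 0}"
  shows "TS3 a b k alpha = {}" "TSh b k alpha = {}"
proof -
  have "False" if "\<forall>x. count M x = alpha x" for M :: "nat multiset"
  proof -
    have "{i. alpha i \<noteq> 0} = set_mset M" using that by (auto simp flip: count_greater_zero_iff)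
    then show False using assms by simp
  qed
  then show "TS3 a b k alpha = {}" "TSh b k alpha = {}" unfolding TS3_def TSh_def by blast+
qed

lemma mono_zero: "\<not> finite {i. alpha i \<noteq> 0} \<Longrightarrow> monomial_sym lam alpha = 0"
  unfolding monomial_sym_def by simp

lemma Tr_size: "x \<in> Tr a b k A \<Longrightarrow> size A = a + b + k"
  unfolding Tr_def by auto

lemma HS_size: "x \<in> HS A b k \<Longrightarrow> size A = b + k"
  unfolding HS_def by auto

lemma fin_facts:
  assumes fin: "finite {i. alpha i \<noteq> 0}"
  shows "count (Abs_multiset alpha) = alpha"
    "size (Abs_multiset alpha) = sum alpha {i. alpha i \<noteq> 0}"
    "(\<forall>x. count M x = alpha x) \<longleftrightarrow> M = Abs_multiset alpha"
proof -
  have f2: "finite {x. 0 < alpha x}" using fin by simp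
  show c: "count (Abs_multiset alpha) = alpha" using count_Abs_multiset[OF f2] .
  have "set_mset (Abs_multiset alpha) = {i. alpha i \<noteq> 0}"
    using c by (auto simp flip: count_greater_zero_iff)
  then show "size (Abs_multiset alpha) = sum alpha {i. alpha i \<noteq> 0}"
    using c by (simp add: size_multiset_overloaded_eq)
  show "(\<forall>x. count M x = alpha x) \<longleftrightarrow> M = Abs_multiset alpha"
    using c by (auto simp: multiset_eq_iff)
qed

lemma first_identity:
  assumes n: "2 \<le> n"
  shows "(\<Sum>lam \<in> {lam. is_partition lam \<and> sum_list lam = 2 * n - 1 \<and>
              dominated lam [n - 1, n - 1, 1]}. monomial_sym lam alpha)
       = (\<Sum>i = 0..n - 2. (-1) ^ i * schur ([n - 1, n - 1 - i] @ replicate (i + 1) 1) alpha)"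
proof (cases "finite {i. alpha i \<noteq> 0}")
  case False
  have "(\<Sum>i = 0..n - 2. (-1) ^ i * schur ([n - 1, n - 1 - i] @ replicate (i + 1) 1) alpha) = 0"
  proof (rule sum.neutral, intro ballI)
    fix i assume i: "i \<in> {0..n-2}"
    have "card (ssyt (sh3 (n-1) (n-1-i) (i+1)) alpha) = card (TS3 (n-1) (n-1-i) (i+1) alpha)"
      using i n by (intro ssyt3) auto
    then show "(-1) ^ i * schur ([n - 1, n - 1 - i] @ replicate (i + 1) 1) alpha = 0"
      using infinite_rhs[OF False] unfolding schur_def sh3_def by simp
  qed
  moreover have "(\<Sum>lam \<in> {lam. is_partition lam \<and> sum_list lam = 2 * n - 1 \<and>
              dominated lam [n - 1, n - 1, 1]}. monomial_sym lam alpha) = 0"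
    using mono_zero[OF False] by simp
  ultimately show ?thesis by simp
next
  case True
  define A where "A = Abs_multiset alpha"
  note ff = fin_facts[OF True, folded A_def]
  have L: "(\<Sum>lam \<in> {lam. is_partition lam \<and> sum_list lam = 2 * n - 1 \<and>
              dominated lam [n - 1, n - 1, 1]}. monomial_sym lam alpha)
        = (if size A = 2*n - 1 \<and> (\<forall>i. alpha i \<le> n - 1) then 1 else 0)"
    unfolding ff(2) by (rule lhs_value[OF True]) (use dom1 n in auto)
  have T: "TS3 (n-1) (n-1-i) (i+1) alpha = Trp n (Suc i) A" for i
    unfolding TS3_def Trp_def Tr_def ff(3) by auto
  have R: "(\<Sum>i = 0..n - 2. (-1) ^ i * schur ([n - 1, n - 1 - i] @ replicate (i + 1) 1) alpha)
      = (\<Sum>i = 0..n - 2. (-1::int) ^ i * int (card (Trp n (Suc i) A)))"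
  proof (rule sum.cong[OF refl])
    fix i assume i: "i \<in> {0..n-2}"
    have "card (ssyt (sh3 (n-1) (n-1-i) (i+1)) alpha) = card (TS3 (n-1) (n-1-i) (i+1) alpha)"
      using i n by (intro ssyt3) auto
    then show "(-1) ^ i * schur ([n - 1, n - 1 - i] @ replicate (i + 1) 1) alpha
        = (-1::int) ^ i * int (card (Trp n (Suc i) A))"
      unfolding schur_def sh3_def T by simp
  qed
  show ?thesis
  proof (cases "size A = 2*n - 1")
    case False
    have "Trp n (Suc i) A = {}" if "i \<in> {0..n-2}" for i
      using False that n Tr_size unfolding Trp_def by fastforce
    then show ?thesis unfolding L R using False by simp
  next
    case sz: True
    have "(\<Sum>i = 0..n - 2. (-1::int) ^ i * int (card (Trp n (Suc i) A)))
        = (\<Sum>k = 1..n - 1. (-1::int) ^ (k-1) * int (card (Trp n k A)))"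
    proof -
      have "n - 1 = Suc (n - 2)" using n by simp
      then have e: "{1..n-1} = {Suc 0..Suc (n-2)}" by simp
      show ?thesis unfolding e sum.shift_bounds_cl_Suc_ivl by simp
    qed
    also have "\<dots> = (if \<exists>x. n \<le> count A x then 0 else 1)" using count_main[OF sz n] .
    finally have r: "(\<Sum>i = 0..n - 2. (-1::int) ^ i * int (card (Trp n (Suc i) A))) = (if \<exists>x. n \<le> count A x then 0 else 1)" .
    have le: "\<And>x::nat. (x \<le> n - 1) = (x < n)" using n by auto
    have eqc: "(\<forall>i. alpha i \<le> n - 1) \<longleftrightarrow> \<not> (\<exists>x. n \<le> count A x)"
      unfolding ff(1) le by (auto simp: not_le)
    show ?thesis unfolding L R r using sz eqc by simp
  qed
qed

lemma second_identity:
  assumes n: "2 \<le> n"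
  shows "(\<Sum>lam \<in> {lam. is_partition lam \<and> sum_list lam = n \<and>
              dominated lam [n - 1, 1]}. monomial_sym lam alpha)
       = (\<Sum>i = 0..n - 2. (-1) ^ i * schur ([n - 1 - i] @ replicate (i + 1) 1) alpha)"
proof (cases "finite {i. alpha i \<noteq> 0}")
  case False
  have "(\<Sum>i = 0..n - 2. (-1) ^ i * schur ([n - 1 - i] @ replicate (i + 1) 1) alpha) = 0"
  proof (rule sum.neutral, intro ballI)
    fix i assume i: "i \<in> {0..n-2}"
    have "card (ssyt (shh (n-1-i) (i+1)) alpha) = card (TSh (n-1-i) (i+1) alpha)"
      using i n by (intro ssyth) auto
    then show "(-1) ^ i * schur ([n - 1 - i] @ replicate (i + 1) 1) alpha = 0"
      using infinite_rhs[OF False] unfolding schur_def shh_def by simp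
  qed
  moreover have "(\<Sum>lam \<in> {lam. is_partition lam \<and> sum_list lam = n \<and>
              dominated lam [n - 1, 1]}. monomial_sym lam alpha) = 0"
    using mono_zero[OF False] by simp
  ultimately show ?thesis by simp
next
  case True
  define A where "A = Abs_multiset alpha"
  note ff = fin_facts[OF True, folded A_def]
  have L: "(\<Sum>lam \<in> {lam. is_partition lam \<and> sum_list lam = n \<and>
              dominated lam [n - 1, 1]}. monomial_sym lam alpha)
        = (if size A = n \<and> (\<forall>i. alpha i \<le> n - 1) then 1 else 0)"
    unfolding ff(2) by (rule lhs_value[OF True]) (use dom2 n in auto)
  have T: "TSh (n-1-i) (i+1) alpha = HS A (n - Suc i) (Suc i)" for i
    unfolding TSh_def HS_def ff(3) by auto
  have R: "(\<Sum>i = 0..n - 2. (-1) ^ i * schur ([n - 1 - i] @ replicate (i + 1) 1) alpha)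
      = (\<Sum>i = 0..n - 2. (-1::int) ^ i * int (card (HS A (n - Suc i) (Suc i))))"
  proof (rule sum.cong[OF refl])
    fix i assume i: "i \<in> {0..n-2}"
    have "card (ssyt (shh (n-1-i) (i+1)) alpha) = card (TSh (n-1-i) (i+1) alpha)"
      using i n by (intro ssyth) auto
    then show "(-1) ^ i * schur ([n - 1 - i] @ replicate (i + 1) 1) alpha
        = (-1::int) ^ i * int (card (HS A (n - Suc i) (Suc i)))"
      unfolding schur_def shh_def T by simp
  qed
  show ?thesis
  proof (cases "size A = n")
    case False
    have "HS A (n - Suc i) (Suc i) = {}" if "i \<in> {0..n-2}" for i
      using False that n HS_size by fastforce
    then show ?thesis unfolding L R using False by simp
  next
    case sz: True
    have "(\<Sum>i = 0..n - 2. (-1::int) ^ i * int (card (HS A (n - Suc i) (Suc i))))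
        = (\<Sum>k = 1..n - 1. (-1::int) ^ (k-1) * int (card (HS A (n - k) k)))"
    proof -
      have "n - 1 = Suc (n - 2)" using n by simp
      then have e: "{1..n-1} = {Suc 0..Suc (n-2)}" by simp
      show ?thesis unfolding e sum.shift_bounds_cl_Suc_ivl by simp
    qed
    also have "\<dots> = (if \<exists>x. n \<le> count A x then 0 else 1)" using count_hook[OF sz n] .
    finally have r: "(\<Sum>i = 0..n - 2. (-1::int) ^ i * int (card (HS A (n - Suc i) (Suc i)))) = (if \<exists>x. n \<le> count A x then 0 else 1)" .
    have le: "\<And>x::nat. (x \<le> n - 1) = (x < n)" using n by auto
    have eqc: "(\<forall>i. alpha i \<le> n - 1) \<longleftrightarrow> \<not> (\<exists>x. n \<le> count A x)"
      unfolding ff(1) le by (auto simp: not_le)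
    show ?thesis unfolding L R r using sz eqc by simp
  qed
qed

theorem mainTheorem7:
  fixes p :: nat
  assumes "prime p"
  shows "((\<lambda>alpha. \<Sum>lam \<in> {lam. is_partition lam \<and> sum_list lam = 2 * p - 1 \<and>
              dominated lam [p - 1, p - 1, 1]}. monomial_sym lam alpha)
       = (\<lambda>alpha. \<Sum>i = 0..p - 2. (-1) ^ i *
              schur ([p - 1, p - 1 - i] @ replicate (i + 1) 1) alpha))
       \<and> ((\<lambda>alpha. \<Sum>lam \<in> {lam. is_partition lam \<and> sum_list lam = p \<and>
              dominated lam [p - 1, 1]}. monomial_sym lam alpha)
       = (\<lambda>alpha. \<Sum>i = 0..p - 2. (-1) ^ i *
              schur ([p - 1 - i] @ replicate (i + 1) 1) alpha))"
proof -
  have p: "2 \<le> p" using prime_ge_2_nat[OF assms] .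
  show ?thesis using first_identity[OF p] second_identity[OF p] by auto
qed

end
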